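(* Let $n\ge1$ and let $b_1,\ldots,b_n,b',c_1,\ldots,c_n,c'$ be complex parameters. Let $\delta_1=t_1\,\partial/\partial t_1$, $\delta_2=(t_2-1)\,\partial/\partial t_2$, and consider the system of linear partial differential equations for $z(t_1,t_2)$ \begin{align*} &\Big[t_1(\delta_1+\delta_2+c')\Big\{\prod_{i=1}^n(\delta_1+b_i)\Big\}-\delta_1\Big\{\prod_{i=1}^n(\delta_1+c_i-1)\Big\}\Big]z=0,\\ &\{(1-t_2)(\delta_1+\delta_2+c')(\delta_2+b')-\delta_2(\delta_2+c'-1)\}z=0,\\ &\Big[t_1\delta_2\Big\{\prod_{i=1}^n(\delta_1+b_i)\Big\}+\{(1-t_2)(\delta_2+b')-\delta_2\}\Big\{\prod_{i=1}^n(\delta_1+c_i-1)\Big\}\Big]z=0. \end{align*} Let $D_1=s_1\,\partial/\partial s_1$, $D_2=s_2\,\partial/\partial s_2$, $D=D_1+D_2$, and consider the system for $y(s_1,s_2)$ \begin{align*} &\Big[s_1(D_1+\beta_1)\Big\{\prod_{i=1}^n(D+\alpha_i)\Big\}-D_1\Big\{\prod_{i=1}^n(D+\gamma_i-1)\Big\}\Big]y=0,\\ &\Big[s_2(D_2+\beta_2)\Big\{\prod_{i=1}^n(D+\alpha_i)\Big\}-D_2\Big\{\prod_{i=1}^n(D+\gamma_i-1)\Big\}\Big]y=0,\\ &\{s_1(D_1+\beta_1)D_2-s_2(D_2+\beta_2)D_1\}y=0, \end{align*} with $\alpha_i=b_i$, $\gamma_i=c_i$ ($i=1,\ldots,n$),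 $\beta_1=c'-b'$, $\beta_2=b'$. Then the first system is transformed into the second system by the change of variables \[ s_1=t_1,\qquad s_2=\frac{t_1}{t_2},\qquad y=t_2^{b'}z . \]
   Context: Products of commuting operators denote composition. "Transformed into" means that, after rewriting the operators in the new variables $s_1=t_1$, $s_2=t_1/t_2$ and conjugating by the factor $t_2^{b'}$, the first system becomes equivalent to the second, so that $z$ solves the first system exactly when $y=t_2^{b'}z$ solves the second. *)

theory Defs
  imports "HOL-Analysis.Analysis"
begin

type_synonym fn2 = "complex \<times> complex \<Rightarrow> complex"
type_synonym op2 = "fn2 \<Rightarrow> fn2"

definition holo2 :: "fn2 \<Rightarrow> (complex \<times> complex) set \<Rightarrow> bool" where
  "holo2 f U \<longleftrightarrow> open U \<and>
     (\<forall>p\<in>U. \<exists>a b. (f has_derivative (\<lambda>(u, v). a * u + b * v)) (at p))"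

definition pd1 :: op2 where
  "pd1 f = (\<lambda>(x, y). deriv (\<lambda>u. f (u, y)) x)"
definition pd2 :: op2 where
  "pd2 f = (\<lambda>(x, y). deriv (\<lambda>v. f (x, v)) y)"

definition opadd :: "op2 \<Rightarrow> op2 \<Rightarrow> op2" where
  "opadd A B = (\<lambda>f p. A f p + B f p)"
definition opsub :: "op2 \<Rightarrow> op2 \<Rightarrow> op2" where
  "opsub A B = (\<lambda>f p. A f p - B f p)"
definition opshift :: "op2 \<Rightarrow> complex \<Rightarrow> op2" where
  "opshift A c = (\<lambda>f p. A f p + c * f p)"
definition opmul :: "fn2 \<Rightarrow> op2 \<Rightarrow> op2" where
  "opmul g A = (\<lambda>f p. g p * A f p)"

text \<open>Composition product L 0 ... L (k-1) (order immaterial for commuting factors).\<close>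
fun opprod :: "(nat \<Rightarrow> op2) \<Rightarrow> nat \<Rightarrow> op2" where
  "opprod L 0 = id"
| "opprod L (Suc k) = L k \<circ> opprod L k"

definition delta1 :: op2 where
  "delta1 f = (\<lambda>(t1, t2). t1 * pd1 f (t1, t2))"
definition delta2 :: op2 where
  "delta2 f = (\<lambda>(t1, t2). (t2 - 1) * pd2 f (t1, t2))"

definition sys1 :: "nat \<Rightarrow> (nat \<Rightarrow> complex) \<Rightarrow> (nat \<Rightarrow> complex) \<Rightarrow> complex \<Rightarrow> complex
    \<Rightarrow> fn2 \<Rightarrow> (complex \<times> complex) set \<Rightarrow> bool" where
  "sys1 n b c b' c' z U \<longleftrightarrow>
    (let Pb = opprod (\<lambda>i. opshift delta1 (b i)) n;
         Pc = opprod (\<lambda>i. opshift delta1 (c i - 1)) n;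
         T = opshift (opadd delta1 delta2) c';
         E1 = opsub (opmul fst (T \<circ> Pb)) (delta1 \<circ> Pc);
         E2 = opsub (opmul (\<lambda>(t1, t2). 1 - t2) (T \<circ> opshift delta2 b'))
                    (delta2 \<circ> opshift delta2 (c' - 1));
         E3 = opadd (opmul fst (delta2 \<circ> Pb))
                    (opsub (opmul (\<lambda>(t1, t2). 1 - t2) (opshift delta2 b')) delta2 \<circ> Pc)
     in \<forall>p\<in>U. E1 z p = 0 \<and> E2 z p = 0 \<and> E3 z p = 0)"

definition D1 :: op2 where
  "D1 f = (\<lambda>(s1, s2). s1 * pd1 f (s1, s2))"
definition D2 :: op2 where
  "D2 f = (\<lambda>(s1, s2). s2 * pd2 f (s1, s2))"

definition sys2 :: "nat \<Rightarrow> (nat \<Rightarrow> complex) \<Rightarrow> complex \<Rightarrow> complex \<Rightarrow> (nat \<Rightarrow> complex)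
    \<Rightarrow> fn2 \<Rightarrow> (complex \<times> complex) set \<Rightarrow> bool" where
  "sys2 n \<alpha> \<beta>1 \<beta>2 \<gamma> y V \<longleftrightarrow>
    (let D = opadd D1 D2;
         Qa = opprod (\<lambda>i. opshift D (\<alpha> i)) n;
         Qc = opprod (\<lambda>i. opshift D (\<gamma> i - 1)) n;
         F1 = opsub (opmul fst (opshift D1 \<beta>1 \<circ> Qa)) (D1 \<circ> Qc);
         F2 = opsub (opmul snd (opshift D2 \<beta>2 \<circ> Qa)) (D2 \<circ> Qc);
         F3 = opsub (opmul fst (opshift D1 \<beta>1 \<circ> D2)) (opmul snd (opshift D2 \<beta>2 \<circ> D1))
     in \<forall>p\<in>V. F1 y p = 0 \<and> F2 y p = 0 \<and> F3 y p = 0)"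

text \<open>Change of variables s1 = t1, s2 = t1/t2, and y = t2 powr b' * z.\<close>
definition cov :: "complex \<times> complex \<Rightarrow> complex \<times> complex" where
  "cov = (\<lambda>(t1, t2). (t1, t1 / t2))"

definition ytrans :: "complex \<Rightarrow> fn2 \<Rightarrow> fn2" where
  "ytrans b' z = (\<lambda>(s1, s2). (s1 / s2) powr b' * z (s1, s1 / s2))"

text \<open>Domain where the change of variables and the principal branch of t2 powr b' are holomorphic.\<close>
definition Dom :: "(complex \<times> complex) set" where
  "Dom = {(t1, t2). t1 \<noteq> 0 \<and> \<not> (Im t2 = 0 \<and> Re t2 \<le> 0)}"

end

theory Submission
  imports Defs "HOL-Complex_Analysis.Complex_Analysis"
begin

definition lin :: "complex \<Rightarrow> complex \<Rightarrow> complex \<times> complex \<Rightarrow> complex" where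
  "lin a b = (\<lambda>(u, v). a * u + b * v)"

lemma lin_slice1: "(\<lambda>h. lin a b (h, 0)) = (*) a" by (auto simp: lin_def)
lemma lin_slice2: "(\<lambda>h. lin a b (0, h)) = (*) b" by (auto simp: lin_def)

lemma has_derivative_slice1:
  assumes "(f has_derivative lin a b) (at (x, y))"
  shows "((\<lambda>u. f (u, y)) has_field_derivative a) (at x)"
proof -
  have "((\<lambda>u. (u, y)) has_derivative (\<lambda>h. (h, 0))) (at x)"
    by (auto intro!: derivative_eq_intros)
  from has_derivative_compose[OF this assms] show ?thesis
    by (simp add: has_field_derivative_def lin_slice1 o_def)
qed

lemma has_derivative_slice2:
  assumes "(f has_derivative lin a b) (at (x, y))"
  shows "((\<lambda>v. f (x, v)) has_field_derivative b) (at y)"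
proof -
  have "((\<lambda>v. (x, v)) has_derivative (\<lambda>h. (0, h))) (at y)"
    by (auto intro!: derivative_eq_intros)
  from has_derivative_compose[OF this assms] show ?thesis
    by (simp add: has_field_derivative_def lin_slice2 o_def)
qed

lemma holo2_D:
  assumes "holo2 f U" "p \<in> U"
  shows "(f has_derivative lin (pd1 f p) (pd2 f p)) (at p)"
proof -
  obtain x y where p: "p = (x, y)" by force
  from assms obtain a b where d: "(f has_derivative lin a b) (at p)"
    unfolding holo2_def lin_def by blast
  have "pd1 f p = a" using has_derivative_slice1[OF d[unfolded p]]
    by (simp add: p pd1_def DERIV_imp_deriv)
  moreover have "pd2 f p = b" using has_derivative_slice2[OF d[unfolded p]]
    by (simp add: p pd2_def DERIV_imp_deriv)
  ultimately show ?thesis using d by simp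
qed

lemma holo2_I:
  assumes "open U" "\<And>p. p \<in> U \<Longrightarrow> \<exists>a b. (f has_derivative lin a b) (at p)"
  shows "holo2 f U"
  using assms unfolding holo2_def lin_def by blast

lemma holo2_open: "holo2 f U \<Longrightarrow> open U" by (simp add: holo2_def)

lemma holo2_pd1_deriv:
  assumes "holo2 f U" "(x, y) \<in> U"
  shows "((\<lambda>u. f (u, y)) has_field_derivative pd1 f (x, y)) (at x)"
  using has_derivative_slice1[OF holo2_D[OF assms]] .

lemma holo2_pd2_deriv:
  assumes "holo2 f U" "(x, y) \<in> U"
  shows "((\<lambda>v. f (x, v)) has_field_derivative pd2 f (x, y)) (at y)"
  using has_derivative_slice2[OF holo2_D[OF assms]] .

lemma holo2_cont: "holo2 f U \<Longrightarrow> continuous_on U f"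
  by (metis continuous_at_imp_continuous_on has_derivative_continuous holo2_D)

lemma pd1_eqI: "((\<lambda>u. f (u, y)) has_field_derivative d) (at x) \<Longrightarrow> pd1 f (x, y) = d"
  by (simp add: pd1_def DERIV_imp_deriv)
lemma pd2_eqI: "((\<lambda>v. f (x, v)) has_field_derivative d) (at y) \<Longrightarrow> pd2 f (x, y) = d"
  by (simp add: pd2_def DERIV_imp_deriv)

lemma lin_linear: "bounded_linear (lin a b)"
proof -
  have "bounded_linear (\<lambda>h. a * fst h + b * snd h)"
    by (intro bounded_linear_add bounded_linear_compose[OF bounded_linear_mult_right] bounded_linear_fst bounded_linear_snd)
  moreover have "(\<lambda>h. a * fst h + b * snd h) = lin a b" by (auto simp: lin_def)
  ultimately show ?thesis by simp
qed

lemma holo2_slice1_holo: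
  assumes "holo2 f U"
  shows "(\<lambda>u. f (u, y)) holomorphic_on {u. (u, y) \<in> U}"
  using holo2_pd1_deriv[OF assms] unfolding holomorphic_on_def field_differentiable_def
  by (blast intro: has_field_derivative_at_within)

lemma holo2_slice2_holo:
  assumes "holo2 f U"
  shows "(\<lambda>v. f (x, v)) holomorphic_on {v. (x, v) \<in> U}"
  using holo2_pd2_deriv[OF assms] unfolding holomorphic_on_def field_differentiable_def
  by (blast intro: has_field_derivative_at_within)

lemma open_slice1: "open (U::(complex\<times>complex) set) \<Longrightarrow> open {u. (u, y) \<in> U}"
  using continuous_open_vimage[of U "\<lambda>u. (u,y)"] by (simp add: vimage_def continuous_intros)
lemma open_slice2: "open (U::(complex\<times>complex) set) \<Longrightarrow> open {v. (x, v) \<in> U}"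
  using continuous_open_vimage[of U "\<lambda>v. (x,v)"] by (simp add: vimage_def continuous_intros)

lemma holo2_mult:
  assumes "holo2 f U" "holo2 g U"
  shows "holo2 (\<lambda>p. f p * g p) U"
proof (rule holo2_I)
  show "open U" using assms holo2_open by blast
  fix p assume p: "p \<in> U"
  have "((\<lambda>p. f p * g p) has_derivative (\<lambda>h. f p * lin (pd1 g p) (pd2 g p) h + lin (pd1 f p) (pd2 f p) h * g p)) (at p)"
    by (rule has_derivative_mult[OF holo2_D[OF assms(1) p] holo2_D[OF assms(2) p]])
  moreover have "(\<lambda>h. f p * lin (pd1 g p) (pd2 g p) h + lin (pd1 f p) (pd2 f p) h * g p) = lin (f p * pd1 g p + pd1 f p * g p) (f p * pd2 g p + pd2 f p * g p)"
    by (simp add: lin_def fun_eq_iff algebra_simps)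
  ultimately have "((\<lambda>p. f p * g p) has_derivative lin (f p * pd1 g p + pd1 f p * g p) (f p * pd2 g p + pd2 f p * g p)) (at p)" by simp
  thus "\<exists>a b. ((\<lambda>p. f p * g p) has_derivative lin a b) (at p)" by blast
qed

lemma holo2_add:
  assumes "holo2 f U" "holo2 g U"
  shows "holo2 (\<lambda>p. f p + g p) U"
proof (rule holo2_I)
  show "open U" using assms holo2_open by blast
  fix p assume p: "p \<in> U"
  have "((\<lambda>p. f p + g p) has_derivative (\<lambda>h. lin (pd1 f p) (pd2 f p) h + lin (pd1 g p) (pd2 g p) h)) (at p)"
    by (rule has_derivative_add[OF holo2_D[OF assms(1) p] holo2_D[OF assms(2) p]])
  moreover have "(\<lambda>h. lin (pd1 f p) (pd2 f p) h + lin (pd1 g p) (pd2 g p) h) = lin (pd1 f p + pd1 g p) (pd2 f p + pd2 g p)"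
    by (simp add: lin_def fun_eq_iff algebra_simps)
  ultimately have "((\<lambda>p. f p + g p) has_derivative lin (pd1 f p + pd1 g p) (pd2 f p + pd2 g p)) (at p)" by simp
  thus "\<exists>a b. ((\<lambda>p. f p + g p) has_derivative lin a b) (at p)" by blast
qed

lemma holo2_const: "open U \<Longrightarrow> holo2 (\<lambda>p. c) U"
proof (rule holo2_I)
  fix p :: "complex \<times> complex"
  have "((\<lambda>p. c) has_derivative (\<lambda>h. 0)) (at p)" by simp
  moreover have "(\<lambda>h. 0) = lin 0 0" by (auto simp: lin_def)
  ultimately have "((\<lambda>p. c) has_derivative lin 0 0) (at p)" by simp
  thus "\<exists>a b. ((\<lambda>p. c) has_derivative lin a b) (at p)" by blast
qed

lemma holo2_fst: "open U \<Longrightarrow> holo2 fst U"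
proof (rule holo2_I)
  fix p :: "complex \<times> complex"
  have "(fst has_derivative fst) (at p)" by (rule has_derivative_fst[OF has_derivative_ident])
  moreover have "fst = lin 1 (0::complex)" by (auto simp: lin_def)
  ultimately have "(fst has_derivative lin 1 (0::complex)) (at p)" by simp
  thus "\<exists>a b. (fst has_derivative lin a b) (at p)" by blast
qed

lemma holo2_snd: "open U \<Longrightarrow> holo2 snd U"
proof (rule holo2_I)
  fix p :: "complex \<times> complex"
  have "(snd has_derivative snd) (at p)" by (rule has_derivative_snd[OF has_derivative_ident])
  moreover have "snd = lin 0 (1::complex)" by (auto simp: lin_def)
  ultimately have "(snd has_derivative lin 0 (1::complex)) (at p)" by simp
  thus "\<exists>a b. (snd has_derivative lin a b) (at p)" by blast
qed

lemma holo2_cmult: "holo2 f U \<Longrightarrow> holo2 (\<lambda>p. c * f p) U"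
  using holo2_mult[OF holo2_const[OF holo2_open] ] by blast

lemma holo2_diff:
  assumes "holo2 f U" "holo2 g U"
  shows "holo2 (\<lambda>p. f p - g p) U"
  using holo2_add[OF assms(1) holo2_cmult[OF assms(2), of "-1"]] by simp

lemma holo2_compose1:
  assumes "holo2 g U" "h holomorphic_on S" "open S" "\<And>p. p \<in> U \<Longrightarrow> g p \<in> S"
  shows "holo2 (\<lambda>p. h (g p)) U"
proof (rule holo2_I)
  show "open U" using assms holo2_open by blast
  fix p assume p: "p \<in> U"
  have "(h has_field_derivative deriv h (g p)) (at (g p))"
    using holomorphic_derivI[OF assms(2,3) assms(4)[OF p]] .
  hence "((\<lambda>p. h (g p)) has_derivative (\<lambda>x. deriv h (g p) * lin (pd1 g p) (pd2 g p) x)) (at p)"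
    using has_derivative_compose[OF holo2_D[OF assms(1) p], of h] 
    by (simp add: has_field_derivative_def o_def)
  moreover have "(\<lambda>x. deriv h (g p) * lin (pd1 g p) (pd2 g p) x) = lin (deriv h (g p) * pd1 g p) (deriv h (g p) * pd2 g p)"
    by (simp add: lin_def fun_eq_iff algebra_simps)
  ultimately have "((\<lambda>p. h (g p)) has_derivative lin (deriv h (g p) * pd1 g p) (deriv h (g p) * pd2 g p)) (at p)" by simp
  thus "\<exists>a b. ((\<lambda>p. h (g p)) has_derivative lin a b) (at p)" by blast
qed

lemma holo2_compose2:
  assumes "holo2 g V" "holo2 f1 U" "holo2 f2 U" "\<And>p. p \<in> U \<Longrightarrow> (f1 p, f2 p) \<in> V"
  shows "holo2 (\<lambda>p. g (f1 p, f2 p)) U"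
proof (rule holo2_I)
  show "open U" using assms holo2_open by blast
  fix p assume p: "p \<in> U"
  have "((\<lambda>p. (f1 p, f2 p)) has_derivative (\<lambda>h. (lin (pd1 f1 p) (pd2 f1 p) h, lin (pd1 f2 p) (pd2 f2 p) h))) (at p)"
    by (rule has_derivative_Pair[OF holo2_D[OF assms(2) p] holo2_D[OF assms(3) p]])
  from has_derivative_compose[OF this holo2_D[OF assms(1) assms(4)[OF p]]]
  have "((\<lambda>p. g (f1 p, f2 p)) has_derivative (\<lambda>h. lin (pd1 g (f1 p, f2 p)) (pd2 g (f1 p, f2 p)) (lin (pd1 f1 p) (pd2 f1 p) h, lin (pd1 f2 p) (pd2 f2 p) h))) (at p)"
    by (simp add: o_def)
  moreover have "(\<lambda>h. lin (pd1 g (f1 p, f2 p)) (pd2 g (f1 p, f2 p)) (lin (pd1 f1 p) (pd2 f1 p) h, lin (pd1 f2 p) (pd2 f2 p) h)) = lin (pd1 g (f1 p, f2 p) * pd1 f1 p + pd2 g (f1 p, f2 p) * pd1 f2 p) (pd1 g (f1 p, f2 p) * pd2 f1 p + pd2 g (f1 p, f2 p) * pd2 f2 p)"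
    by (simp add: lin_def fun_eq_iff algebra_simps)
  ultimately have "((\<lambda>p. g (f1 p, f2 p)) has_derivative lin (pd1 g (f1 p, f2 p) * pd1 f1 p + pd2 g (f1 p, f2 p) * pd1 f2 p) (pd1 g (f1 p, f2 p) * pd2 f1 p + pd2 g (f1 p, f2 p) * pd2 f2 p)) (at p)" by simp
  thus "\<exists>a b. ((\<lambda>p. g (f1 p, f2 p)) has_derivative lin a b) (at p)" by blast
qed

lemma holo2_cong:
  assumes "holo2 f U" "\<And>p. p \<in> U \<Longrightarrow> f p = g p"
  shows "holo2 g U"
proof (rule holo2_I)
  show "open U" using assms holo2_open by blast
  fix p assume p: "p \<in> U"
  have "(g has_derivative lin (pd1 f p) (pd2 f p)) (at p)"
    by (rule has_derivative_transform_within_open[OF holo2_D[OF assms(1) p] \<open>open U\<close> p assms(2)])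
  thus "\<exists>a b. (g has_derivative lin a b) (at p)" by blast
qed

lemma holo2_subset: "holo2 f U \<Longrightarrow> open W \<Longrightarrow> W \<subseteq> U \<Longrightarrow> holo2 f W"
  unfolding holo2_def by blast

lemma pd1_local:
  assumes "open U" "p \<in> U" "\<And>q. q \<in> U \<Longrightarrow> f q = g q"
  shows "pd1 f p = pd1 g p"
proof -
  obtain x y where p: "p = (x, y)" by force
  have "eventually (\<lambda>u. u \<in> {u. (u, y) \<in> U}) (nhds x)"
    using open_slice1[OF assms(1)] assms(2) p by (intro eventually_nhds_in_open) auto
  hence "eventually (\<lambda>u. f (u, y) = g (u, y)) (nhds x)"
    by eventually_elim (use assms(3) in auto)
  thus ?thesis unfolding p pd1_def by (simp add: deriv_cong_ev)
qed

lemma pd2_local: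
  assumes "open U" "p \<in> U" "\<And>q. q \<in> U \<Longrightarrow> f q = g q"
  shows "pd2 f p = pd2 g p"
proof -
  obtain x y where p: "p = (x, y)" by force
  have "eventually (\<lambda>v. v \<in> {v. (x, v) \<in> U}) (nhds y)"
    using open_slice2[OF assms(1)] assms(2) p by (intro eventually_nhds_in_open) auto
  hence "eventually (\<lambda>v. f (x, v) = g (x, v)) (nhds y)"
    by eventually_elim (use assms(3) in auto)
  thus ?thesis unfolding p pd2_def by (simp add: deriv_cong_ev)
qed

lemma box_lemma:
  fixes U :: "(complex \<times> complex) set"
  assumes "open U" "(x0, y0) \<in> U"
  obtains r where "r > 0" "\<And>u v. u \<in> cball x0 (2*r) \<Longrightarrow> v \<in> ball y0 r \<Longrightarrow> (u, v) \<in> U"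
proof -
  obtain e where e: "e > 0" "ball (x0, y0) e \<subseteq> U" using assms open_contains_ball by blast
  show ?thesis
  proof (rule that[of "e/5"])
    show "e/5 > 0" using e by simp
    fix u v assume u: "u \<in> cball x0 (2*(e/5))" and v: "v \<in> ball y0 (e/5)"
    have "dist (x0, y0) (u, v) = norm (x0 - u, y0 - v)" by (simp add: dist_norm)
    also have "\<dots> \<le> norm (x0 - u) + norm (y0 - v)" by (rule norm_Pair_le)
    also have "\<dots> < e" using u v e by (simp add: dist_norm)
    finally show "(u, v) \<in> U" using e by auto
  qed
qed

definition ker :: "fn2 \<Rightarrow> complex \<Rightarrow> real \<Rightarrow> complex \<Rightarrow> complex \<Rightarrow> real \<Rightarrow> complex" where
  "ker f x0 R x y t = f (circlepath x0 R t, y) / (circlepath x0 R t - x)^2 * vector_derivative (circlepath x0 R) (at t)"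

lemma circ_norm: "R \<ge> 0 \<Longrightarrow> norm (circlepath x0 R t - x0) = R"
  by (simp add: circlepath norm_mult norm_exp_eq_Re)

lemma circ_in: "R \<ge> 0 \<Longrightarrow> circlepath x0 R t \<in> cball x0 R"
  using circ_norm[of R x0 t] by (simp add: dist_norm norm_minus_commute)

lemma circ_ne: assumes "x \<in> ball x0 R" shows "circlepath x0 R t \<noteq> x"
proof -
  have R: "R \<ge> 0" using assms by (metis dist_not_less_zero less_eq_real_def mem_ball not_le_imp_less order_less_imp_le order_less_le_trans zero_le_dist)
  show ?thesis using circ_norm[OF R, of x0 t] assms by (auto simp: dist_norm norm_minus_commute)
qed

lemma pd1_repr:
  assumes hf: "holo2 f U" and box: "\<And>u. u \<in> cball x0 R \<Longrightarrow> (u, y) \<in> U" and x: "x \<in> ball x0 R"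
  shows "pd1 f (x, y) = integral {0..1} (ker f x0 R x y) / (2 * of_real pi * \<i>)"
proof -
  let ?S = "{u. (u, y) \<in> U}"
  have hol: "(\<lambda>u. f (u, y)) holomorphic_on ?S" by (rule holo2_slice1_holo[OF hf])
  have sub: "cball x0 R \<subseteq> ?S" using box by auto
  have cont: "continuous_on (cball x0 R) (\<lambda>u. f (u, y))"
    using holomorphic_on_imp_continuous_on[OF hol] continuous_on_subset sub by blast
  have hb: "(\<lambda>u. f (u, y)) holomorphic_on ball x0 R"
    using hol sub ball_subset_cball holomorphic_on_subset by blast
  have "((\<lambda>u. f (u, y)) has_field_derivative (1 / (2 * of_real pi * \<i>) * contour_integral (circlepath x0 R) (\<lambda>u. f (u, y) / (u - x)^2))) (at x)"
    by (rule Cauchy_derivative_integral_circlepath(2)[OF cont hb x])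
  hence "pd1 f (x, y) = 1 / (2 * of_real pi * \<i>) * contour_integral (circlepath x0 R) (\<lambda>u. f (u, y) / (u - x)^2)"
    by (rule pd1_eqI)
  moreover have "contour_integral (circlepath x0 R) (\<lambda>u. f (u, y) / (u - x)^2) = integral {0..1} (ker f x0 R x y)"
    unfolding contour_integral_integral by (rule arg_cong[where f="integral {0..1}"]) (simp add: fun_eq_iff ker_def)
  ultimately show ?thesis by simp
qed

lemma ker_cont:
  assumes fc: "continuous_on U f" and R: "R > 0"
    and A: "\<And>x y. (x, y) \<in> A \<Longrightarrow> x \<in> ball x0 R \<and> (\<forall>u\<in>cball x0 R. (u, y) \<in> U)"
  shows "continuous_on (A \<times> {0..1}) (\<lambda>(p, t). ker f x0 R (fst p) (snd p) t)"
proof -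
  define g where "g = (\<lambda>t::real. x0 + of_real R * exp (2 * of_real pi * \<i> * of_real t))"
  have gc: "circlepath x0 R = g" by (simp add: circlepath g_def)
  have vd: "vector_derivative g (at t) = 2 * of_real pi * \<i> * of_real R * exp (2 * of_real pi * \<i> * of_real t)" for t
    by (simp add: gc[symmetric] vector_derivative_circlepath)
  have c1: "continuous_on (A \<times> {0..1}) (\<lambda>z. f (g (snd z), snd (fst z)))"
  proof -
    have h1: "continuous_on (A \<times> {0..1}) (\<lambda>z. (g (snd z), snd (fst z)))"
      unfolding g_def by (intro continuous_intros)
    have gin: "g t \<in> cball x0 R" for t using circ_in[of R x0 t] R gc by simp
    have h2: "(\<lambda>z. (g (snd z), snd (fst z))) ` (A \<times> {0..1}) \<subseteq> U"
      using A gin by fastforce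
    show ?thesis by (rule continuous_on_compose2[OF fc h1 h2])
  qed
  have c2: "continuous_on (A \<times> {0..1}) (\<lambda>z. (g (snd z) - fst (fst z))^2)"
    unfolding g_def by (intro continuous_intros)
  have nz: "(g (snd z) - fst (fst z))^2 \<noteq> 0" if "z \<in> A \<times> {0..1}" for z
  proof -
    obtain x y t where z: "z = ((x, y), t)" by (metis prod.collapse)
    have "x \<in> ball x0 R" using that A z by auto
    thus ?thesis using circ_ne[of x x0 R t] gc z by simp
  qed
  have c3: "continuous_on (A \<times> {0..1}) (\<lambda>z. 2 * of_real pi * \<i> * of_real R * exp (2 * of_real pi * \<i> * of_real (snd z)))"
    by (intro continuous_intros)
  have "continuous_on (A \<times> {0..1}) (\<lambda>z. f (g (snd z), snd (fst z)) / (g (snd z) - fst (fst z))^2 * (2 * of_real pi * \<i> * of_real R * exp (2 * of_real pi * \<i> * of_real (snd z))))"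
    using nz by (intro continuous_on_mult continuous_on_divide c1 c2 c3) auto
  thus ?thesis by (simp add: split_beta ker_def gc vd)
qed

lemma ker_cont_t:
  assumes fc: "continuous_on U f" and R: "R > 0"
    and x: "x \<in> ball x0 R" and box: "\<And>u. u \<in> cball x0 R \<Longrightarrow> (u, y) \<in> U"
  shows "continuous_on {0..1} (ker f x0 R x y)"
proof -
  have "continuous_on ({(x, y)} \<times> {0..1}) (\<lambda>(p, t). ker f x0 R (fst p) (snd p) t)"
    by (rule ker_cont[OF fc R]) (use x box in auto)
  moreover have "continuous_on {0..1} (\<lambda>t::real. ((x, y), t))" by (intro continuous_intros)
  moreover have "(\<lambda>t::real. ((x, y), t)) ` {0..1} \<subseteq> {(x, y)} \<times> {0..1}" by auto
  ultimately have "continuous_on {0..1} (\<lambda>t. (\<lambda>(p, t). ker f x0 R (fst p) (snd p) t) ((x, y), t))"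
    by (rule continuous_on_compose2)
  thus ?thesis by (simp add: eta_contract_eq)
qed

lemma holo2_pd1_cont:
  assumes hf: "holo2 f U"
  shows "continuous_on U (pd1 f)"
proof -
  have oU: "open U" using hf holo2_open by blast
  have fc: "continuous_on U f" using hf holo2_cont by blast
  have "isCont (pd1 f) p0" if p0: "p0 \<in> U" for p0
  proof -
    obtain x0 y0 where p0e: "p0 = (x0, y0)" by force
    obtain r where r: "r > 0" "\<And>u v. u \<in> cball x0 (2*r) \<Longrightarrow> v \<in> ball y0 r \<Longrightarrow> (u, v) \<in> U"
      using box_lemma[OF oU p0[unfolded p0e]] by blast
    define N where "N = ball x0 r \<times> ball y0 r"
    have A: "x \<in> ball x0 (2*r) \<and> (\<forall>u\<in>cball x0 (2*r). (u, y) \<in> U)" if "(x, y) \<in> N" for x y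
      using r that by (auto simp: N_def)
    have eq: "pd1 f p = integral (cbox 0 1) (\<lambda>t. ker f x0 (2*r) (fst p) (snd p) t) / (2 * of_real pi * \<i>)"
      if "p \<in> N" for p
    proof -
      obtain x y where p: "p = (x, y)" by force
      show ?thesis using pd1_repr[OF hf, of x0 "2*r" y x] A[of x y] that p by (simp add: cbox_interval)
    qed
    have "continuous_on N (\<lambda>p. integral (cbox 0 1) (\<lambda>t. ker f x0 (2*r) (fst p) (snd p) t))"
      by (rule integral_continuous_on_param)
         (use ker_cont[OF fc _ A, of N] r in \<open>auto simp: cbox_interval\<close>)
    hence "continuous_on N (\<lambda>p. integral (cbox 0 1) (\<lambda>t. ker f x0 (2*r) (fst p) (snd p) t) / (2 * of_real pi * \<i>))"
      by (auto intro!: continuous_intros)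
    hence "continuous_on N (pd1 f)" by (rule continuous_on_eq) (use eq in auto)
    moreover have "open N" "p0 \<in> N" using r by (auto simp: N_def p0e open_Times)
    ultimately show ?thesis using continuous_on_eq_continuous_at by blast
  qed
  thus ?thesis by (simp add: continuous_at_imp_continuous_on)
qed

lemma pd1_slice_deriv:
  assumes hf: "holo2 f U" and c2: "continuous_on U (pd2 f)" and r: "r > 0"
    and box: "\<And>u v. u \<in> cball x0 (2*r) \<Longrightarrow> v \<in> ball y0 r \<Longrightarrow> (u, v) \<in> U"
    and x: "x \<in> ball x0 r" and y: "y \<in> ball y0 r"
  shows "((\<lambda>v. pd1 f (x, v)) has_field_derivative integral {0..1} (ker (pd2 f) x0 (2*r) x y) / (2 * of_real pi * \<i>)) (at y)"
proof -
  define Y where "Y = ball y0 r"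
  have oY: "open Y" and cY: "convex Y" by (auto simp: Y_def)
  have fc: "continuous_on U f" using hf holo2_cont by blast
  have x2: "x \<in> ball x0 (2*r)" using x r by auto
  have R: "2 * r > 0" using r by simp
  have inU: "(circlepath x0 (2*r) t, v) \<in> U" if "v \<in> Y" for t v
    using box[OF circ_in[of "2*r" x0 t]] r that by (auto simp: Y_def)
  have der: "((\<lambda>v. ker f x0 (2*r) x v t) has_field_derivative ker (pd2 f) x0 (2*r) x v t) (at v within Y)"
    if "v \<in> Y" "t \<in> cbox 0 1" for v t
  proof -
    have "((\<lambda>v. f (circlepath x0 (2*r) t, v)) has_field_derivative pd2 f (circlepath x0 (2*r) t, v)) (at v)"
      by (rule holo2_pd2_deriv[OF hf inU[OF that(1)]])
    hence "((\<lambda>v. f (circlepath x0 (2*r) t, v) / (circlepath x0 (2*r) t - x)^2 * vector_derivative (circlepath x0 (2*r)) (at t))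
        has_field_derivative pd2 f (circlepath x0 (2*r) t, v) / (circlepath x0 (2*r) t - x)^2 * vector_derivative (circlepath x0 (2*r)) (at t)) (at v)"
      by (intro DERIV_cmult_right DERIV_cdivide)
    thus ?thesis unfolding ker_def by (rule has_field_derivative_at_within)
  qed
  have int: "ker f x0 (2*r) x v integrable_on cbox 0 1" if "v \<in> Y" for v
    using ker_cont_t[OF fc R x2, of v] inU[OF that] box r that
    by (auto simp: cbox_interval Y_def intro!: integrable_continuous_interval)
  have cont: "continuous_on (Y \<times> cbox 0 1) (\<lambda>(v, t). ker (pd2 f) x0 (2*r) x v t)"
  proof -
    have "continuous_on (({x} \<times> Y) \<times> {0..1}) (\<lambda>(p, t). ker (pd2 f) x0 (2*r) (fst p) (snd p) t)"
      by (rule ker_cont[OF c2 R]) (use x2 box r in \<open>auto simp: Y_def\<close>)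
    moreover have "continuous_on (Y \<times> {0..1}) (\<lambda>z. ((x, fst z), snd z))" by (intro continuous_intros)
    moreover have "(\<lambda>z. ((x, fst z), snd z)) ` (Y \<times> {0..1}) \<subseteq> ({x} \<times> Y) \<times> {0..1}" by auto
    ultimately have "continuous_on (Y \<times> {0..1}) (\<lambda>z. (\<lambda>(p, t). ker (pd2 f) x0 (2*r) (fst p) (snd p) t) ((x, fst z), snd z))"
      by (rule continuous_on_compose2)
    thus ?thesis by (simp add: split_beta cbox_interval)
  qed
  have yY: "y \<in> Y" using y by (simp add: Y_def)
  have "((\<lambda>v. integral (cbox 0 1) (ker f x0 (2*r) x v)) has_field_derivative integral (cbox 0 1) (ker (pd2 f) x0 (2*r) x y)) (at y within Y)"
    by (rule leibniz_rule_field_derivative[OF der int cont yY cY])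
  hence "((\<lambda>v. integral (cbox 0 1) (ker f x0 (2*r) x v)) has_field_derivative integral (cbox 0 1) (ker (pd2 f) x0 (2*r) x y)) (at y)"
    using at_within_open[OF yY oY] by simp
  hence "((\<lambda>v. integral {0..1} (ker f x0 (2*r) x v) / (2 * of_real pi * \<i>)) has_field_derivative integral {0..1} (ker (pd2 f) x0 (2*r) x y) / (2 * of_real pi * \<i>)) (at y)"
    by (intro DERIV_cdivide) (simp add: cbox_interval)
  moreover have "integral {0..1} (ker f x0 (2*r) x v) / (2 * of_real pi * \<i>) = pd1 f (x, v)" if "v \<in> Y" for v
    using pd1_repr[OF hf _ x2, of v] box that by (auto simp: Y_def)
  ultimately show ?thesis
    by (rule has_field_derivative_transform_within_open[OF _ oY yY])
qed

lemma holo2_pd1: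
  assumes hf: "holo2 f U" and c2: "continuous_on U (pd2 f)"
  shows "holo2 (pd1 f) U"
proof (rule holo2_I)
  show oU: "open U" using hf holo2_open by blast
  fix p0 assume p0: "p0 \<in> U"
  obtain x0 y0 where p0e: "p0 = (x0, y0)" by force
  obtain r where r: "r > 0" "\<And>u v. u \<in> cball x0 (2*r) \<Longrightarrow> v \<in> ball y0 r \<Longrightarrow> (u, v) \<in> U"
    using box_lemma[OF oU p0[unfolded p0e]] by blast
  define X where "X = ball x0 r"
  define Y where "Y = ball y0 r"
  define J where "J = (\<lambda>x y. integral {0..1} (ker (pd2 f) x0 (2*r) x y) / (2 * of_real pi * \<i>))"
  have x0X: "x0 \<in> X" and y0Y: "y0 \<in> Y" using r by (auto simp: X_def Y_def)
  have oX: "open X" and oY: "open Y" and cY: "convex Y" by (auto simp: X_def Y_def)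
  have fc: "continuous_on U f" using hf holo2_cont by blast
  let ?S = "{u. (u, y0) \<in> U}"
  have oS: "open ?S" by (rule open_slice1[OF oU])
  have x0S: "x0 \<in> ?S" using p0 p0e by simp
  have hol: "deriv (\<lambda>u. f (u, y0)) holomorphic_on ?S"
    by (rule holomorphic_deriv[OF holo2_slice1_holo[OF hf] oS])
  have "(deriv (\<lambda>u. f (u, y0)) has_field_derivative deriv (deriv (\<lambda>u. f (u, y0))) x0) (at x0 within X)"
    by (rule holomorphic_derivI[OF hol oS x0S])
  moreover have "deriv (\<lambda>u. f (u, y0)) = (\<lambda>x. pd1 f (x, y0))" by (simp add: pd1_def fun_eq_iff)
  ultimately have fx: "((\<lambda>x. pd1 f (x, y0)) has_derivative (*) (deriv (deriv (\<lambda>u. f (u, y0))) x0)) (at x0 within X)"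
    by (simp add: has_field_derivative_def)
  have fy: "((\<lambda>y. pd1 f (x, y)) has_derivative blinfun_apply (blinfun_mult_right (J x y))) (at y within Y)"
    if "x \<in> X" "y \<in> Y" for x y
  proof -
    have "((\<lambda>v. pd1 f (x, v)) has_field_derivative J x y) (at y)"
      unfolding J_def by (rule pd1_slice_deriv[OF hf c2 r]) (use that in \<open>auto simp: X_def Y_def\<close>)
    hence "((\<lambda>v. pd1 f (x, v)) has_field_derivative J x y) (at y within Y)" by (rule has_field_derivative_at_within)
    thus ?thesis by (simp add: has_field_derivative_def)
  qed
  have Jc: "continuous_on (X \<times> Y) (\<lambda>p. J (fst p) (snd p))"
  proof -
    have "continuous_on (X \<times> Y) (\<lambda>p. integral (cbox 0 1) (\<lambda>t. ker (pd2 f) x0 (2*r) (fst p) (snd p) t))"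
      by (rule integral_continuous_on_param)
         (use ker_cont[OF c2, of "2*r" "X \<times> Y" x0] r in \<open>auto simp: cbox_interval X_def Y_def\<close>)
    hence "continuous_on (X \<times> Y) (\<lambda>p. integral (cbox 0 1) (\<lambda>t. ker (pd2 f) x0 (2*r) (fst p) (snd p) t) / (2 * of_real pi * \<i>))"
      by (auto intro!: continuous_intros)
    thus ?thesis by (simp add: J_def cbox_interval)
  qed
  have "continuous_on (X \<times> Y) (\<lambda>p. blinfun_mult_right (J (fst p) (snd p)))"
    using Jc by (intro continuous_intros)
  hence "continuous (at (x0, y0) within X \<times> Y) (\<lambda>p. blinfun_mult_right (J (fst p) (snd p)))"
    using x0X y0Y continuous_on_eq_continuous_within by blast
  moreover have "(\<lambda>(x, y). blinfun_mult_right (J x y)) = (\<lambda>p. blinfun_mult_right (J (fst p) (snd p)))"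
    by (auto simp: fun_eq_iff)
  ultimately have fyc: "continuous (at (x0, y0) within X \<times> Y) (\<lambda>(x, y). blinfun_mult_right (J x y))"
    by simp
  have "((\<lambda>(x, y). pd1 f (x, y)) has_derivative (\<lambda>(tx, ty). deriv (deriv (\<lambda>u. f (u, y0))) x0 * tx + blinfun_apply (blinfun_mult_right (J x0 y0)) ty)) (at (x0, y0) within X \<times> Y)"
    by (rule has_derivative_partialsI[OF fx fy fyc y0Y cY])
  hence "(pd1 f has_derivative lin (deriv (deriv (\<lambda>u. f (u, y0))) x0) (J x0 y0)) (at p0)"
    using at_within_open[of "(x0, y0)" "X \<times> Y"] x0X y0Y oX oY
    by (simp add: p0e lin_def open_Times split_beta mult.commute)
  thus "\<exists>a b. (pd1 f has_derivative lin a b) (at p0)" by blast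
qed

definition sw :: "fn2 \<Rightarrow> fn2" where "sw f = (\<lambda>p. f (snd p, fst p))"
definition swU :: "(complex \<times> complex) set \<Rightarrow> (complex \<times> complex) set" where "swU U = {p. (snd p, fst p) \<in> U}"

lemma swU_swU [simp]: "swU (swU U) = U" by (auto simp: swU_def)
lemma sw_sw [simp]: "sw (sw f) = f" by (auto simp: sw_def)
lemma open_swU: "open U \<Longrightarrow> open (swU U)"
  using continuous_open_vimage[of U "\<lambda>p. (snd p, fst p)"] by (simp add: swU_def vimage_def continuous_intros)

lemma holo2_sw: assumes "holo2 f U" shows "holo2 (sw f) (swU U)"
proof -
  have o: "open (swU U)" using open_swU[OF holo2_open[OF assms]] .
  show ?thesis unfolding sw_def
    by (rule holo2_compose2[OF assms holo2_snd[OF o] holo2_fst[OF o]]) (auto simp: swU_def)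
qed

lemma pd1_sw: "pd1 (sw f) = sw (pd2 f)" by (simp add: fun_eq_iff pd1_def pd2_def sw_def)
lemma pd2_sw: "pd2 (sw f) = sw (pd1 f)" by (simp add: fun_eq_iff pd1_def pd2_def sw_def)

lemma cont_sw: "continuous_on U g \<Longrightarrow> continuous_on (swU U) (sw g)"
  unfolding sw_def swU_def
  by (rule continuous_on_compose2[of U g]) (auto intro!: continuous_intros)

lemma holo2_pd2_cont: "holo2 f U \<Longrightarrow> continuous_on U (pd2 f)"
  using cont_sw[OF holo2_pd1_cont[OF holo2_sw, of f U]] by (simp add: pd1_sw)

lemma holo2_pd:
  assumes "holo2 f U"
  shows "holo2 (pd1 f) U" "holo2 (pd2 f) U"
proof -
  show "holo2 (pd1 f) U" by (rule holo2_pd1[OF assms holo2_pd2_cont[OF assms]])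
  have "holo2 (pd1 (sw f)) (swU U)"
    by (rule holo2_pd1[OF holo2_sw[OF assms]]) (simp add: pd2_sw cont_sw holo2_pd1_cont[OF assms])
  from holo2_sw[OF this] show "holo2 (pd2 f) U" by (simp add: pd1_sw)
qed

lemma mixed:
  assumes hf: "holo2 f U" and p0: "p0 \<in> U"
  shows "pd2 (pd1 f) p0 = pd1 (pd2 f) p0"
proof -
  have oU: "open U" using hf holo2_open by blast
  obtain x0 y0 where p0e: "p0 = (x0, y0)" by force
  obtain r where r: "r > 0" "\<And>u v. u \<in> cball x0 (2*r) \<Longrightarrow> v \<in> ball y0 r \<Longrightarrow> (u, v) \<in> U"
    using box_lemma[OF oU p0[unfolded p0e]] by blast
  have "pd2 (pd1 f) (x0, y0) = integral {0..1} (ker (pd2 f) x0 (2*r) x0 y0) / (2 * of_real pi * \<i>)"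
    by (rule pd2_eqI, rule pd1_slice_deriv[OF hf holo2_pd2_cont[OF hf] r]) (use r in auto)
  also have "\<dots> = pd1 (pd2 f) (x0, y0)"
    by (rule pd1_repr[OF holo2_pd(2)[OF hf], symmetric]) (use r in auto)
  finally show ?thesis by (simp add: p0e)
qed

lemma powr_m1: "(w::complex) \<noteq> 0 \<Longrightarrow> w * w powr (s - 1) = w powr s"
  by (simp add: powr_def exp_diff left_diff_distrib)

lemma Dom_iff: "(t1, t2) \<in> Dom \<longleftrightarrow> t1 \<noteq> 0 \<and> t2 \<notin> \<real>\<^sub>\<le>\<^sub>0"
  by (auto simp: Dom_def complex_nonpos_Reals_iff)

lemma Dom_ne: "(t1, t2) \<in> Dom \<Longrightarrow> t1 \<noteq> 0 \<and> t2 \<noteq> 0"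
  by (auto simp: Dom_iff)

lemma cov_simp [simp]: "cov (a, b) = (a, a / b)" by (simp add: cov_def)

lemma cov_cov: "a \<noteq> 0 \<Longrightarrow> b \<noteq> 0 \<Longrightarrow> cov (cov (a, b)) = (a, b)" by simp

lemma covU_char:
  assumes "U \<subseteq> Dom"
  shows "cov ` U = {q. fst q \<noteq> 0 \<and> snd q \<noteq> 0 \<and> cov q \<in> U}"
proof (rule set_eqI)
  fix q :: "complex \<times> complex"
  obtain a b where q: "q = (a, b)" by force
  show "q \<in> cov ` U \<longleftrightarrow> q \<in> {q. fst q \<noteq> 0 \<and> snd q \<noteq> 0 \<and> cov q \<in> U}"
  proof
    assume "q \<in> cov ` U"
    then obtain t1 t2 where p: "(t1, t2) \<in> U" "q = cov (t1, t2)" by force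
    then have "t1 \<noteq> 0" "t2 \<noteq> 0" using assms Dom_ne by blast+
    then show "q \<in> {q. fst q \<noteq> 0 \<and> snd q \<noteq> 0 \<and> cov q \<in> U}" using p by auto
  next
    assume "q \<in> {q. fst q \<noteq> 0 \<and> snd q \<noteq> 0 \<and> cov q \<in> U}"
    then have "a \<noteq> 0" "b \<noteq> 0" "cov (a, b) \<in> U" using q by auto
    moreover have "cov (cov (a, b)) = (a, b)" using \<open>a \<noteq> 0\<close> \<open>b \<noteq> 0\<close> by simp
    ultimately show "q \<in> cov ` U" unfolding q by (intro image_eqI[where x="cov (a, b)"]) auto
  qed
qed

lemma open_covU:
  assumes "open U" "U \<subseteq> Dom"
  shows "open (cov ` U)"
proof -
  let ?S = "{q::complex\<times>complex. fst q \<noteq> 0 \<and> snd q \<noteq> 0}"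
  have oS: "open ?S"
  proof -
    have "?S = (fst -` (-{0})) \<inter> (snd -` (-{0}))" by auto
    moreover have "open (fst -` (-{0::complex}) \<inter> snd -` (-{0::complex}))"
      by (intro open_Int open_vimage_fst open_vimage_snd) auto
    ultimately show ?thesis by simp
  qed
  have ce: "cov = (\<lambda>q. (fst q, fst q / snd q))" by (auto simp: cov_def fun_eq_iff split_beta)
  have "continuous_on ?S (\<lambda>q. (fst q, fst q / snd q))" by (intro continuous_intros) auto
  hence "continuous_on ?S cov" by (simp add: ce)
  hence "open (cov -` U \<inter> ?S)" using continuous_on_open_vimage[OF oS] assms(1) by blast
  moreover have "cov -` U \<inter> ?S = cov ` U" using covU_char[OF assms(2)] by auto
  ultimately show ?thesis by simp
qed

lemma chain1:
  assumes "(f has_derivative lin a b) (at (ca x, cb x))"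
    and "(ca has_field_derivative da) (at x)" "(cb has_field_derivative db) (at x)"
  shows "((\<lambda>u. f (ca u, cb u)) has_field_derivative a * da + b * db) (at x)"
proof -
  have "((\<lambda>u. (ca u, cb u)) has_derivative (\<lambda>h. (da * h, db * h))) (at x)"
    using has_derivative_Pair[OF assms(2)[unfolded has_field_derivative_def] assms(3)[unfolded has_field_derivative_def]] .
  from has_derivative_compose[OF this assms(1)]
  have "((\<lambda>u. f (ca u, cb u)) has_derivative (\<lambda>h. lin a b (da * h, db * h))) (at x)" by (simp add: o_def)
  moreover have "(\<lambda>h. lin a b (da * h, db * h)) = (*) (a * da + b * db)"
    by (simp add: lin_def fun_eq_iff algebra_simps)
  ultimately show ?thesis by (simp add: has_field_derivative_def)
qed

lemma pd_cov:
  assumes hg: "holo2 g V" and q: "cov (t1, t2) \<in> V" and t2: "t2 \<noteq> 0"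
  shows "pd1 (\<lambda>p. g (cov p)) (t1, t2) = pd1 g (cov (t1, t2)) + pd2 g (cov (t1, t2)) / t2"
    and "pd2 (\<lambda>p. g (cov p)) (t1, t2) = - pd2 g (cov (t1, t2)) * t1 / t2^2"
proof -
  have D: "(g has_derivative lin (pd1 g (t1, t1/t2)) (pd2 g (t1, t1/t2))) (at (t1, t1/t2))"
    using holo2_D[OF hg q] by simp
  have "((\<lambda>u. g (u, u / t2)) has_field_derivative pd1 g (t1, t1/t2) * 1 + pd2 g (t1, t1/t2) * (1 / t2)) (at t1)"
    by (rule chain1[where ca="\<lambda>u. u" and cb="\<lambda>u. u / t2", OF D]) (use t2 in \<open>auto intro!: derivative_eq_intros\<close>)
  thus "pd1 (\<lambda>p. g (cov p)) (t1, t2) = pd1 g (cov (t1, t2)) + pd2 g (cov (t1, t2)) / t2"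
    by (intro pd1_eqI) simp
  have dv: "((\<lambda>v. t1 * inverse v) has_field_derivative t1 * (- (inverse t2 ^ 2))) (at t2)"
    using DERIV_cmult[OF DERIV_inverse[OF t2], of t1] by (simp add: numeral_2_eq_2)
  have "((\<lambda>v. g (t1, t1 * inverse v)) has_field_derivative pd1 g (t1, t1/t2) * 0 + pd2 g (t1, t1/t2) * (t1 * (- (inverse t2 ^ 2)))) (at t2)"
    by (rule chain1[where ca="\<lambda>v. t1" and cb="\<lambda>v. t1 * inverse v", OF _ DERIV_const dv]) (use D in \<open>simp add: divide_inverse\<close>)
  hence "((\<lambda>v. g (cov (t1, v))) has_field_derivative - pd2 g (cov (t1, t2)) * t1 / t2^2) (at t2)"
    by (simp add: divide_inverse power_inverse mult_ac)
  thus "pd2 (\<lambda>p. g (cov p)) (t1, t2) = - pd2 g (cov (t1, t2)) * t1 / t2^2"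
    by (rule pd2_eqI)
qed

lemma D1_val: "D1 f (a, b) = a * pd1 f (a, b)" by (simp add: D1_def)
lemma D2_val: "D2 f (a, b) = b * pd2 f (a, b)" by (simp add: D2_def)
lemma delta1_D1: "delta1 = D1" by (simp add: fun_eq_iff delta1_def D1_def)
lemma delta2_val: "delta2 f (a, b) = (b - 1) * pd2 f (a, b)" by (simp add: delta2_def)

lemma D1_eq: "D1 f = (\<lambda>q. fst q * pd1 f q)" by (simp add: fun_eq_iff D1_def split_beta)
lemma D2_eq: "D2 f = (\<lambda>q. snd q * pd2 f q)" by (simp add: fun_eq_iff D2_def split_beta)
lemma delta2_eq: "delta2 f = (\<lambda>q. (snd q - 1) * pd2 f q)" by (simp add: fun_eq_iff delta2_def split_beta)

lemma holo2_D1: "holo2 f W \<Longrightarrow> holo2 (D1 f) W"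
  unfolding D1_eq by (rule holo2_mult[OF holo2_fst[OF holo2_open] holo2_pd(1)])
lemma holo2_D2: "holo2 f W \<Longrightarrow> holo2 (D2 f) W"
  unfolding D2_eq by (rule holo2_mult[OF holo2_snd[OF holo2_open] holo2_pd(2)])
lemma holo2_delta2: "holo2 f W \<Longrightarrow> holo2 (delta2 f) W"
  unfolding delta2_eq by (rule holo2_mult[OF holo2_diff[OF holo2_snd[OF holo2_open] holo2_const[OF holo2_open]] holo2_pd(2)])

lemma holo2_opshift: "holo2 (A f) W \<Longrightarrow> holo2 f W \<Longrightarrow> holo2 (opshift A c f) W"
  unfolding opshift_def by (rule holo2_add[OF _ holo2_cmult])

lemma holo2_opadd: "holo2 (A f) W \<Longrightarrow> holo2 (B f) W \<Longrightarrow> holo2 (opadd A B f) W"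
  unfolding opadd_def by (rule holo2_add)

lemma holo2_opprod:
  assumes "\<And>i g. holo2 g W \<Longrightarrow> holo2 (L i g) W" "holo2 f W"
  shows "holo2 (opprod L n f) W"
  by (induction n) (auto intro: assms)

definition mm :: "complex \<Rightarrow> complex \<times> complex \<Rightarrow> complex" where
  "mm b' = (\<lambda>p. snd p powr b')"

definition rel :: "complex \<Rightarrow> (complex \<times> complex) set \<Rightarrow> fn2 \<Rightarrow> fn2 \<Rightarrow> bool" where
  "rel b' U g h \<longleftrightarrow> holo2 g (cov ` U) \<and> holo2 h U \<and> (\<forall>p\<in>U. g (cov p) = mm b' p * h p)"

context
  fixes U :: "(complex \<times> complex) set"
  assumes oU: "open U" and UD: "U \<subseteq> Dom"
begin

lemma pU: assumes "(t1, t2) \<in> U" shows "t1 \<noteq> 0 \<and> t2 \<noteq> 0 \<and> t2 \<notin> \<real>\<^sub>\<le>\<^sub>0"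
proof -
  have "(t1, t2) \<in> Dom" using assms UD by (rule subsetD[rotated])
  hence "t1 \<noteq> 0 \<and> t2 \<notin> \<real>\<^sub>\<le>\<^sub>0" by (simp add: Dom_iff)
  moreover have "t2 \<noteq> 0" using calculation by auto
  ultimately show ?thesis by simp
qed

lemma oV: "open (cov ` U)" by (rule open_covU[OF oU UD])

lemma m_holo: "holo2 (mm b') U"
proof -
  have h: "(\<lambda>w. w powr b') holomorphic_on (- \<real>\<^sub>\<le>\<^sub>0)"
    unfolding holomorphic_on_def
  proof
    fix w :: complex assume "w \<in> - \<real>\<^sub>\<le>\<^sub>0"
    hence "((\<lambda>w. w powr b') has_field_derivative (b' * w powr (b' - 1))) (at w)"
      by (intro has_field_derivative_powr) simp
    thus "(\<lambda>w. w powr b') field_differentiable at w within - \<real>\<^sub>\<le>\<^sub>0"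
      unfolding field_differentiable_def by (blast intro: has_field_derivative_at_within)
  qed
  have "holo2 (\<lambda>p. (\<lambda>w. w powr b') (snd p)) U"
  proof (rule holo2_compose1[OF holo2_snd[OF oU] h open_Compl[OF closed_nonpos_Reals_complex]])
    fix p assume "p \<in> U"
    then obtain t1 t2 where "p = (t1, t2)" "(t1, t2) \<in> U" by (cases p) auto
    thus "snd p \<in> - \<real>\<^sub>\<le>\<^sub>0" using pU by simp
  qed
  thus ?thesis by (simp add: mm_def)
qed

lemma m_nz: assumes "p \<in> U" shows "mm b' p \<noteq> 0"
proof -
  obtain t1 t2 where "p = (t1, t2)" by (cases p)
  hence "snd p \<noteq> 0" using pU assms by simp
  thus ?thesis by (simp add: mm_def powr_def)
qed

lemma m_pd1:
  assumes hh: "holo2 h U" and p: "(t1, t2) \<in> U"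
  shows "pd1 (\<lambda>p. mm b' p * h p) (t1, t2) = mm b' (t1, t2) * pd1 h (t1, t2)"
proof (rule pd1_eqI)
  show "((\<lambda>u. mm b' (u, t2) * h (u, t2)) has_field_derivative mm b' (t1, t2) * pd1 h (t1, t2)) (at t1)"
    unfolding mm_def using DERIV_cmult[OF holo2_pd1_deriv[OF hh p], of "t2 powr b'"] by simp
qed

lemma m_pd2:
  assumes hh: "holo2 h U" and p: "(t1, t2) \<in> U"
  shows "t2 * pd2 (\<lambda>p. mm b' p * h p) (t1, t2) = mm b' (t1, t2) * (t2 * pd2 h (t1, t2) + b' * h (t1, t2))"
proof -
  have t2: "t2 \<notin> \<real>\<^sub>\<le>\<^sub>0" "t2 \<noteq> 0" using pU[OF p] by auto
  have "((\<lambda>v. v powr b' * h (t1, v)) has_field_derivative (b' * t2 powr (b' - 1)) * h (t1, t2) + t2 powr b' * pd2 h (t1, t2)) (at t2)"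
    using DERIV_mult[OF has_field_derivative_powr[OF t2(1)] holo2_pd2_deriv[OF hh p]] by (simp add: mult_ac)
  hence "pd2 (\<lambda>p. mm b' p * h p) (t1, t2) = (b' * t2 powr (b' - 1)) * h (t1, t2) + t2 powr b' * pd2 h (t1, t2)"
    by (intro pd2_eqI) (simp add: mm_def)
  hence "t2 * pd2 (\<lambda>p. mm b' p * h p) (t1, t2) = b' * (t2 * t2 powr (b' - 1)) * h (t1, t2) + t2 * t2 powr b' * pd2 h (t1, t2)"
    by (simp add: algebra_simps)
  also have "\<dots> = mm b' (t1, t2) * (t2 * pd2 h (t1, t2) + b' * h (t1, t2))"
    by (simp add: powr_m1[OF t2(2)] mm_def algebra_simps)
  finally show ?thesis .
qed

lemma alg0: "(t1::complex) \<noteq> 0 \<Longrightarrow> t2 \<noteq> 0 \<Longrightarrow> X = - B * t1 / t2^2 \<Longrightarrow> B = - X * t2^2 / t1"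
  by (simp add: field_simps)
lemma alg1: "(t1::complex) \<noteq> 0 \<Longrightarrow> t2 \<noteq> 0 \<Longrightarrow> B = - X * t2^2 / t1 \<Longrightarrow> A = M * a - B / t2
   \<Longrightarrow> t2 * X = M * (t2 * c + b * h) \<Longrightarrow> t1 * A = M * (t1 * a + t2 * c + b * h)"
proof -
  assume t: "t1 \<noteq> 0" "t2 \<noteq> 0" and hB: "B = - X * t2^2 / t1" and hA: "A = M * a - B / t2"
    and hm: "t2 * X = M * (t2 * c + b * h)"
  have "t1 * B = - X * t2^2" using hB t by simp
  hence "t1 * B / t2 = - (t2 * X)" using t by (simp add: power2_eq_square)
  hence "t1 * A = t1 * (M * a) + t2 * X" using hA by (simp add: right_diff_distrib)
  thus ?thesis using hm by (simp add: algebra_simps)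
qed
lemma alg2: "(t1::complex) \<noteq> 0 \<Longrightarrow> t2 \<noteq> 0 \<Longrightarrow> B = - X * t2^2 / t1
   \<Longrightarrow> t2 * X = M * (t2 * c + b * h) \<Longrightarrow> t1 / t2 * B = M * (- (t2 * c) - b * h)"
  by (simp add: field_simps power2_eq_square)

lemma rel_D:
  assumes r: "rel b' U g h" and p: "(t1, t2) \<in> U"
  shows "D1 g (cov (t1, t2)) = mm b' (t1, t2) * (D1 h (t1, t2) + D2 h (t1, t2) + b' * h (t1, t2))"
    and "D2 g (cov (t1, t2)) = mm b' (t1, t2) * (- D2 h (t1, t2) - b' * h (t1, t2))"
proof -
  have hg: "holo2 g (cov ` U)" and hh: "holo2 h U" and eq: "\<And>p. p \<in> U \<Longrightarrow> g (cov p) = mm b' p * h p"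
    using r by (auto simp: rel_def)
  have t: "t1 \<noteq> 0" "t2 \<noteq> 0" using pU[OF p] by auto
  have q: "cov (t1, t2) \<in> cov ` U" using p by blast
  have e1: "pd1 (\<lambda>p. g (cov p)) (t1, t2) = pd1 (\<lambda>p. mm b' p * h p) (t1, t2)"
    by (rule pd1_local[OF oU p eq])
  have e2: "pd2 (\<lambda>p. g (cov p)) (t1, t2) = pd2 (\<lambda>p. mm b' p * h p) (t1, t2)"
    by (rule pd2_local[OF oU p eq])
  note c1 = pd_cov(1)[OF hg q t(2)] and c2 = pd_cov(2)[OF hg q t(2)]
  note m1 = m_pd1[OF hh p, of b'] and m2 = m_pd2[OF hh p, of b']
  define X where "X = pd2 (\<lambda>p. mm b' p * h p) (t1, t2)"
  define A where "A = pd1 g (cov (t1, t2))"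
  define B where "B = pd2 g (cov (t1, t2))"
  define M where "M = mm b' (t1, t2)"
  have hX: "X = - B * t1 / t2^2" using c2 e2 unfolding X_def B_def by simp
  have hB: "B = - X * t2^2 / t1" by (rule alg0[OF t hX])
  have hA: "A = M * pd1 h (t1, t2) - B / t2" using c1 e1 m1 unfolding A_def B_def M_def by simp
  have hm: "t2 * X = M * (t2 * pd2 h (t1, t2) + b' * h (t1, t2))" using m2 unfolding X_def M_def .
  have "D1 g (cov (t1, t2)) = t1 * A" by (simp add: D1_def A_def)
  also have "\<dots> = M * (t1 * pd1 h (t1, t2) + t2 * pd2 h (t1, t2) + b' * h (t1, t2))"
    by (rule alg1[OF t hB hA hm])
  finally show "D1 g (cov (t1, t2)) = mm b' (t1, t2) * (D1 h (t1, t2) + D2 h (t1, t2) + b' * h (t1, t2))"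
    by (simp add: D1_val D2_val M_def)
  have "D2 g (cov (t1, t2)) = t1 / t2 * B" by (simp add: D2_def B_def)
  also have "\<dots> = M * (- (t2 * pd2 h (t1, t2)) - b' * h (t1, t2))"
    by (rule alg2[OF t hB hm])
  finally show "D2 g (cov (t1, t2)) = mm b' (t1, t2) * (- D2 h (t1, t2) - b' * h (t1, t2))"
    by (simp add: D2_val M_def)
qed

end

lemma powr_holo: "(\<lambda>w. w powr b') holomorphic_on (- \<real>\<^sub>\<le>\<^sub>0)"
  unfolding holomorphic_on_def
proof
  fix w :: complex assume "w \<in> - \<real>\<^sub>\<le>\<^sub>0"
  hence "((\<lambda>w. w powr b') has_field_derivative (b' * w powr (b' - 1))) (at w)"
    by (intro has_field_derivative_powr) simp
  thus "(\<lambda>w. w powr b') field_differentiable at w within - \<real>\<^sub>\<le>\<^sub>0"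
    unfolding field_differentiable_def by (blast intro: has_field_derivative_at_within)
qed

lemma vanish:
  fixes U :: "(complex \<times> complex) set" and G :: "complex \<times> complex \<Rightarrow> complex"
  assumes oU: "open U" and c: "continuous_on U G" and z: "\<And>p. p \<in> U \<Longrightarrow> snd p \<noteq> 1 \<Longrightarrow> G p = 0"
    and p: "p \<in> U"
  shows "G p = 0"
proof (cases "snd p = 1")
  case False thus ?thesis using z p by blast
next
  case True
  obtain a bb where pe: "p = (a, bb)" by force
  define X where "X = (\<lambda>k::nat. (a, bb + of_real (inverse (real (Suc k)))))"
  have "(\<lambda>k. of_real (inverse (real (Suc k))) :: complex) \<longlonglongrightarrow> of_real 0"
    by (rule tendsto_of_real[OF LIMSEQ_inverse_real_of_nat])
  from tendsto_add[OF tendsto_const this, of bb]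
  have "(\<lambda>k. bb + of_real (inverse (real (Suc k)))) \<longlonglongrightarrow> bb" by (simp only: of_real_0 add_0_right)
  hence XL: "X \<longlonglongrightarrow> p" unfolding X_def pe by (intro tendsto_Pair tendsto_const)
  have ev: "eventually (\<lambda>k. X k \<in> U) sequentially"
    using XL oU p by (simp add: tendsto_def)
  have "((G \<circ> X) \<longlongrightarrow> G p) sequentially"
    by (rule continuous_on_tendsto_compose[OF c XL p ev, unfolded o_def[symmetric]])
  moreover have "eventually (\<lambda>k. (G \<circ> X) k = 0) sequentially"
    using ev
  proof eventually_elim
    case (elim k)
    have nz: "1 + complex_of_nat k \<noteq> 0"
      by (metis add.commute of_nat_Suc of_nat_eq_0_iff nat.distinct(1))
    have "snd (X k) \<noteq> 1" using True pe nz by (simp add: X_def)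
    thus ?case using z elim by simp
  qed
  hence "((G \<circ> X) \<longlongrightarrow> 0) sequentially" by (rule tendsto_eventually)
  ultimately show ?thesis using LIMSEQ_unique by blast
qed

lemma E1_val: "opsub (opmul fst (opshift (opadd delta1 delta2) c' \<circ> Pb)) (delta1 \<circ> Pc) z (t1, t2)
   = t1 * (delta1 (Pb z) (t1, t2) + delta2 (Pb z) (t1, t2) + c' * Pb z (t1, t2)) - delta1 (Pc z) (t1, t2)"
  by (simp add: opsub_def opmul_def opshift_def opadd_def)

lemma E2_val: "opsub (opmul (\<lambda>(t1, t2). 1 - t2) (opshift (opadd delta1 delta2) c' \<circ> K))
                    (delta2 \<circ> L) z (t1, t2)
   = (1 - t2) * (delta1 (K z) (t1, t2) + delta2 (K z) (t1, t2) + c' * K z (t1, t2))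
     - delta2 (L z) (t1, t2)"
  by (simp add: opsub_def opmul_def opadd_def opshift_def)

lemma E3_val: "opadd (opmul fst (delta2 \<circ> Pb))
                    (opsub (opmul (\<lambda>(t1, t2). 1 - t2) (opshift delta2 b')) delta2 \<circ> Pc) z (t1, t2)
   = t1 * delta2 (Pb z) (t1, t2) + ((1 - t2) * (delta2 (Pc z) (t1, t2) + b' * Pc z (t1, t2)) - delta2 (Pc z) (t1, t2))"
  by (simp add: opsub_def opmul_def opshift_def opadd_def)

lemma F1_val: "opsub (opmul fst (opshift D1 \<beta> \<circ> Qa)) (D1 \<circ> Qc) y q
   = fst q * (D1 (Qa y) q + \<beta> * Qa y q) - D1 (Qc y) q"
  by (simp add: opsub_def opmul_def opshift_def)

lemma F2_val: "opsub (opmul snd (opshift D2 \<beta> \<circ> Qa)) (D2 \<circ> Qc) y q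
   = snd q * (D2 (Qa y) q + \<beta> * Qa y q) - D2 (Qc y) q"
  by (simp add: opsub_def opmul_def opshift_def)

lemma F3_val: "opsub (opmul fst (opshift D1 \<beta>1 \<circ> D2)) (opmul snd (opshift D2 \<beta>2 \<circ> D1)) y q
   = fst q * (D1 (D2 y) q + \<beta>1 * D2 y q) - snd q * (D2 (D1 y) q + \<beta>2 * D1 y q)"
  by (simp add: opsub_def opmul_def opshift_def)

lemma delta1_val: "delta1 f (a, b) = a * pd1 f (a, b)" by (simp add: delta1_def)

context
  fixes U :: "(complex \<times> complex) set"
  assumes oU: "open U" and UD: "U \<subseteq> Dom"
begin

lemma rel_shift:
  assumes r: "rel b' U g h"
  shows "rel b' U (opshift (opadd D1 D2) c g) (opshift delta1 c h)"
proof -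
  have hg: "holo2 g (cov ` U)" and hh: "holo2 h U" and eq: "\<And>p. p \<in> U \<Longrightarrow> g (cov p) = mm b' p * h p"
    using r by (auto simp: rel_def)
  have "holo2 (opshift (opadd D1 D2) c g) (cov ` U)"
    by (rule holo2_opshift[where A="opadd D1 D2", OF holo2_opadd[where A=D1 and B=D2, OF holo2_D1[OF hg] holo2_D2[OF hg]] hg])
  moreover have "holo2 (opshift delta1 c h) U"
    unfolding delta1_D1 by (rule holo2_opshift[where A=D1, OF holo2_D1[OF hh] hh])
  moreover have "opshift (opadd D1 D2) c g (cov p) = mm b' p * opshift delta1 c h p" if p: "p \<in> U" for p
  proof -
    obtain t1 t2 where pe: "p = (t1, t2)" by force
    note d = rel_D[OF oU UD r p[unfolded pe]]
    have e: "g (cov (t1, t2)) = mm b' (t1, t2) * h (t1, t2)" using eq[OF p] pe by simp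
    have "opshift (opadd D1 D2) c g (cov p) = D1 g (cov (t1, t2)) + D2 g (cov (t1, t2)) + c * g (cov (t1, t2))"
      by (simp only: opshift_def opadd_def pe)
    also have "\<dots> = mm b' (t1, t2) * (D1 h (t1, t2) + D2 h (t1, t2) + b' * h (t1, t2))
        + mm b' (t1, t2) * (- D2 h (t1, t2) - b' * h (t1, t2)) + c * (mm b' (t1, t2) * h (t1, t2))"
      by (simp only: d e)
    also have "\<dots> = mm b' (t1, t2) * (D1 h (t1, t2) + c * h (t1, t2))" by (simp add: algebra_simps)
    also have "\<dots> = mm b' p * opshift delta1 c h p" by (simp add: opshift_def delta1_D1 pe)
    finally show ?thesis .
  qed
  ultimately show ?thesis by (simp add: rel_def)
qed

lemma rel_prod:
  assumes r: "rel b' U g h"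
  shows "rel b' U (opprod (\<lambda>i. opshift (opadd D1 D2) (a i)) n g) (opprod (\<lambda>i. opshift delta1 (a i)) n h)"
  by (induction n) (auto intro: rel_shift simp: r)

lemma rel_D1:
  assumes r: "rel b' U g h"
  shows "rel b' U (D1 g) (\<lambda>p. D1 h p + D2 h p + b' * h p)"
proof -
  have hg: "holo2 g (cov ` U)" and hh: "holo2 h U"
    using r by (auto simp: rel_def)
  have "D1 g (cov p) = mm b' p * (D1 h p + D2 h p + b' * h p)" if p: "p \<in> U" for p
    using rel_D(1)[OF oU UD r, of "fst p" "snd p"] p by simp
  moreover have "holo2 (\<lambda>p. D1 h p + D2 h p + b' * h p) U"
    by (intro holo2_add holo2_D1 holo2_D2 holo2_cmult hh)
  ultimately show ?thesis using holo2_D1[OF hg] hh by (simp add: rel_def)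
qed

lemma rel_D2:
  assumes r: "rel b' U g h"
  shows "rel b' U (D2 g) (\<lambda>p. - D2 h p - b' * h p)"
proof -
  have hg: "holo2 g (cov ` U)" and hh: "holo2 h U"
    using r by (auto simp: rel_def)
  have "D2 g (cov p) = mm b' p * (- D2 h p - b' * h p)" if p: "p \<in> U" for p
    using rel_D(2)[OF oU UD r, of "fst p" "snd p"] p by simp
  moreover have "holo2 (\<lambda>p. - D2 h p - b' * h p) U"
    using holo2_diff[OF holo2_cmult[OF holo2_D2[OF hh], of "-1"] holo2_cmult[OF hh, of b']] by simp
  ultimately show ?thesis using holo2_D2[OF hg] hh by (simp add: rel_def)
qed

lemma rel_base:
  assumes hz: "holo2 z U"
  shows "rel b' U (ytrans b' z) z"
proof -
  let ?V = "cov ` U"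
  have oV: "open ?V" by (rule oV[OF oU UD])
  have Vc: "q \<in> ?V \<Longrightarrow> fst q \<noteq> 0 \<and> snd q \<noteq> 0 \<and> cov q \<in> U" for q
    using covU_char[OF UD] by blast
  have yt: "ytrans b' z = (\<lambda>q. (fst q * inverse (snd q)) powr b' * z (fst q, fst q * inverse (snd q)))"
    by (simp add: fun_eq_iff ytrans_def split_beta divide_inverse)
  have hinv: "holo2 (\<lambda>q. inverse (snd q)) ?V"
    by (rule holo2_compose1[OF holo2_snd[OF oV] holomorphic_on_inverse[OF holomorphic_on_ident[of "-{0}"]]])
       (use Vc in auto)
  have hd: "holo2 (\<lambda>q. fst q * inverse (snd q)) ?V" by (rule holo2_mult[OF holo2_fst[OF oV] hinv])
  have inU: "(fst q, fst q * inverse (snd q)) \<in> U" if "q \<in> ?V" for q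
    using Vc[OF that] by (cases q) (simp add: divide_inverse)
  have nonpos: "fst q * inverse (snd q) \<in> - \<real>\<^sub>\<le>\<^sub>0" if qV: "q \<in> ?V" for q
  proof -
    obtain p where p: "p \<in> U" "q = cov p" using qV by blast
    obtain t1 t2 where pe: "p = (t1, t2)" by force
    have "t1 \<noteq> 0" "t2 \<noteq> 0" "t2 \<notin> \<real>\<^sub>\<le>\<^sub>0" using pU[OF oU UD] p pe by auto
    thus ?thesis using p pe by (simp add: field_simps)
  qed
  have "holo2 (\<lambda>q. (fst q * inverse (snd q)) powr b') ?V"
    by (rule holo2_compose1[OF hd powr_holo open_Compl[OF closed_nonpos_Reals_complex] nonpos])
  moreover have "holo2 (\<lambda>q. z (fst q, fst q * inverse (snd q))) ?V"
    by (rule holo2_compose2[OF hz holo2_fst[OF oV] hd inU])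
  ultimately have "holo2 (ytrans b' z) ?V" unfolding yt by (rule holo2_mult)
  moreover have "ytrans b' z (cov p) = mm b' p * z p" if "p \<in> U" for p
  proof -
    obtain t1 t2 where pe: "p = (t1, t2)" by force
    have "t1 \<noteq> 0" "t2 \<noteq> 0" using pU[OF oU UD] that pe by auto
    thus ?thesis by (simp add: pe ytrans_def mm_def)
  qed
  ultimately show ?thesis using hz by (simp add: rel_def)
qed

lemma pd_shift2:
  assumes hz: "holo2 z U" and p: "(t1, t2) \<in> U"
  shows "pd1 (opshift delta2 a z) (t1, t2) = (t2 - 1) * pd1 (pd2 z) (t1, t2) + a * pd1 z (t1, t2)"
    and "pd2 (opshift delta2 a z) (t1, t2) = pd2 z (t1, t2) + (t2 - 1) * pd2 (pd2 z) (t1, t2) + a * pd2 z (t1, t2)"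
proof -
  have hz2: "holo2 (pd2 z) U" by (rule holo2_pd(2)[OF hz])
  have "((\<lambda>u. (t2 - 1) * pd2 z (u, t2) + a * z (u, t2)) has_field_derivative (t2 - 1) * pd1 (pd2 z) (t1, t2) + a * pd1 z (t1, t2)) (at t1)"
    by (intro DERIV_add DERIV_cmult holo2_pd1_deriv[OF hz2 p] holo2_pd1_deriv[OF hz p])
  thus "pd1 (opshift delta2 a z) (t1, t2) = (t2 - 1) * pd1 (pd2 z) (t1, t2) + a * pd1 z (t1, t2)"
    by (intro pd1_eqI) (simp add: opshift_def delta2_def)
  have d: "((\<lambda>v. v - 1) has_field_derivative 1) (at t2)" by (auto intro!: derivative_eq_intros)
  have "((\<lambda>v. (v - 1) * pd2 z (t1, v) + a * z (t1, v)) has_field_derivative 1 * pd2 z (t1, t2) + pd2 (pd2 z) (t1, t2) * (t2 - 1) + a * pd2 z (t1, t2)) (at t2)"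
    by (intro DERIV_add DERIV_cmult DERIV_mult d holo2_pd2_deriv[OF hz2 p] holo2_pd2_deriv[OF hz p])
  hence "((\<lambda>v. (v - 1) * pd2 z (t1, v) + a * z (t1, v)) has_field_derivative pd2 z (t1, t2) + (t2 - 1) * pd2 (pd2 z) (t1, t2) + a * pd2 z (t1, t2)) (at t2)"
    by (simp add: mult.commute)
  thus "pd2 (opshift delta2 a z) (t1, t2) = pd2 z (t1, t2) + (t2 - 1) * pd2 (pd2 z) (t1, t2) + a * pd2 z (t1, t2)"
    by (intro pd2_eqI) (simp add: opshift_def delta2_def)
qed

lemma pd_h1:
  assumes hz: "holo2 z U" and p: "(t1, t2) \<in> U"
  shows "pd2 (\<lambda>p. D1 z p + D2 z p + b' * z p) (t1, t2) = t1 * pd2 (pd1 z) (t1, t2) + pd2 z (t1, t2) + t2 * pd2 (pd2 z) (t1, t2) + b' * pd2 z (t1, t2)"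
proof -
  have hz1: "holo2 (pd1 z) U" by (rule holo2_pd(1)[OF hz])
  have hz2: "holo2 (pd2 z) U" by (rule holo2_pd(2)[OF hz])
  have d: "((\<lambda>v. v) has_field_derivative 1) (at t2)" by (rule DERIV_ident)
  have "((\<lambda>v. t1 * pd1 z (t1, v) + v * pd2 z (t1, v) + b' * z (t1, v)) has_field_derivative
      t1 * pd2 (pd1 z) (t1, t2) + (1 * pd2 z (t1, t2) + pd2 (pd2 z) (t1, t2) * t2) + b' * pd2 z (t1, t2)) (at t2)"
    by (intro DERIV_add DERIV_cmult DERIV_mult d holo2_pd2_deriv[OF hz1 p] holo2_pd2_deriv[OF hz2 p] holo2_pd2_deriv[OF hz p])
  hence "((\<lambda>v. t1 * pd1 z (t1, v) + v * pd2 z (t1, v) + b' * z (t1, v)) has_field_derivative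
      t1 * pd2 (pd1 z) (t1, t2) + pd2 z (t1, t2) + t2 * pd2 (pd2 z) (t1, t2) + b' * pd2 z (t1, t2)) (at t2)"
    by (simp add: algebra_simps)
  thus ?thesis by (intro pd2_eqI) (simp add: D1_val D2_val)
qed

lemma pd_h2:
  assumes hz: "holo2 z U" and p: "(t1, t2) \<in> U"
  shows "pd1 (\<lambda>p. - D2 z p - b' * z p) (t1, t2) = - (t2 * pd1 (pd2 z) (t1, t2)) - b' * pd1 z (t1, t2)"
    and "pd2 (\<lambda>p. - D2 z p - b' * z p) (t1, t2) = - (pd2 z (t1, t2) + t2 * pd2 (pd2 z) (t1, t2)) - b' * pd2 z (t1, t2)"
proof -
  have hz2: "holo2 (pd2 z) U" by (rule holo2_pd(2)[OF hz])
  have "((\<lambda>u. - (t2 * pd2 z (u, t2)) - b' * z (u, t2)) has_field_derivative - (t2 * pd1 (pd2 z) (t1, t2)) - b' * pd1 z (t1, t2)) (at t1)"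
    by (intro DERIV_diff DERIV_minus DERIV_cmult holo2_pd1_deriv[OF hz2 p] holo2_pd1_deriv[OF hz p])
  thus "pd1 (\<lambda>p. - D2 z p - b' * z p) (t1, t2) = - (t2 * pd1 (pd2 z) (t1, t2)) - b' * pd1 z (t1, t2)"
    by (intro pd1_eqI) (simp add: D2_val)
  have d: "((\<lambda>v. v) has_field_derivative 1) (at t2)" by (rule DERIV_ident)
  have "((\<lambda>v. - (v * pd2 z (t1, v)) - b' * z (t1, v)) has_field_derivative - (1 * pd2 z (t1, t2) + pd2 (pd2 z) (t1, t2) * t2) - b' * pd2 z (t1, t2)) (at t2)"
    by (intro DERIV_diff DERIV_minus DERIV_cmult DERIV_mult d holo2_pd2_deriv[OF hz2 p] holo2_pd2_deriv[OF hz p])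
  hence "((\<lambda>v. - (v * pd2 z (t1, v)) - b' * z (t1, v)) has_field_derivative - (pd2 z (t1, t2) + t2 * pd2 (pd2 z) (t1, t2)) - b' * pd2 z (t1, t2)) (at t2)"
    by (simp add: mult.commute)
  thus "pd2 (\<lambda>p. - D2 z p - b' * z p) (t1, t2) = - (pd2 z (t1, t2) + t2 * pd2 (pd2 z) (t1, t2)) - b' * pd2 z (t1, t2)"
    by (intro pd2_eqI) (simp add: D2_val)
qed

end

lemma alg_e2:
  fixes x w za zb zc zd ze bb cc :: complex
  assumes "w \<noteq> 0"
  shows "x * ((1 - w) * (x * ((w - 1) * zd + bb * zb) + (w - 1) * (zc + (w - 1) * ze + bb * zc) + cc * ((w - 1) * zc + bb * za)) - (w - 1) * (zc + (w - 1) * ze + (cc - 1) * zc))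
   = (w - 1) * (x * ((x * (- (w * zd) - bb * zb) + w * (- (zc + w * ze) - bb * zc) + bb * (- (w * zc) - bb * za)) + (cc - bb) * (- (w * zc) - bb * za)) - x / w * ((- (w * (x * zd + zc + w * ze + bb * zc)) - bb * (x * zb + w * zc + bb * za)) + bb * (x * zb + w * zc + bb * za)))"
proof -
  have "x / w * ((- (w * (x * zd + zc + w * ze + bb * zc)) - bb * (x * zb + w * zc + bb * za)) + bb * (x * zb + w * zc + bb * za))
      = - (x * (x * zd + zc + w * ze + bb * zc))" using assms by (simp add: field_simps)
  thus ?thesis by (simp add: algebra_simps)
qed

lemma alg_e1:
  fixes x w P Pa Pb Q Qa Qb bb cc :: complex
  assumes "w \<noteq> 0"
  shows "x * (x * Pa + (w - 1) * Pb + cc * P) - x * Qa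
   = (x * (x * Pa + w * Pb + bb * P + (cc - bb) * P) - (x * Qa + w * Qb + bb * Q))
     + (x / w * (- (w * Pb) - bb * P + bb * P) - (- (w * Qb) - bb * Q))"
proof -
  have "x / w * (- (w * Pb) - bb * P + bb * P) = - (x * Pb)" using assms by (simp add: field_simps)
  thus ?thesis by (simp add: algebra_simps)
qed

lemma alg_e3:
  fixes x w P Pa Pb Q Qa Qb bb cc :: complex
  assumes "w \<noteq> 0"
  shows "x * ((w - 1) * Pb) + ((1 - w) * ((w - 1) * Qb + bb * Q) - (w - 1) * Qb)
   = (1 - w) * (x / w * (- (w * Pb) - bb * P + bb * P) - (- (w * Qb) - bb * Q))"
proof -
  have "x / w * (- (w * Pb) - bb * P + bb * P) = - (x * Pb)" using assms by (simp add: field_simps)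
  thus ?thesis by (simp add: algebra_simps)
qed

theorem theorem6p1:
  fixes n :: nat and b c :: "nat \<Rightarrow> complex" and b' c' :: complex
    and U :: "(complex \<times> complex) set" and z :: fn2
  assumes "n \<ge> 1" and "open U" and "U \<subseteq> Dom" and "holo2 z U"
  shows "sys1 n b c b' c' z U \<longleftrightarrow> sys2 n b (c' - b') b' c (ytrans b' z) (cov ` U)"
proof -
  have oU: "open U" and UD: "U \<subseteq> Dom" and hz: "holo2 z U" using assms by auto
  define V where "V = cov ` U"
  define y where "y = ytrans b' z"
  define m where "m = mm b'"
  define T where "T = opshift (opadd delta1 delta2) c'"
  define Pb where "Pb = opprod (\<lambda>i. opshift delta1 (b i)) n"
  define Pc where "Pc = opprod (\<lambda>i. opshift delta1 (c i - 1)) n"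
  define Qa where "Qa = opprod (\<lambda>i. opshift (opadd D1 D2) (b i)) n"
  define Qc where "Qc = opprod (\<lambda>i. opshift (opadd D1 D2) (c i - 1)) n"
  define P where "P = Pb z"
  define Q where "Q = Pc z"
  define h1 where "h1 = (\<lambda>p. D1 z p + D2 z p + b' * z p)"
  define h2 where "h2 = (\<lambda>p. - D2 z p - b' * z p)"
  have rb: "rel b' U y z" unfolding y_def by (rule rel_base[OF oU UD hz])
  have rP: "rel b' U (Qa y) P" unfolding Qa_def P_def Pb_def by (rule rel_prod[OF oU UD rb])
  have rQ: "rel b' U (Qc y) Q" unfolding Qc_def Q_def Pc_def by (rule rel_prod[OF oU UD rb])
  have r1: "rel b' U (D1 y) h1" unfolding h1_def by (rule rel_D1[OF oU UD rb])
  have r2: "rel b' U (D2 y) h2" unfolding h2_def by (rule rel_D2[OF oU UD rb])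
  have hP: "holo2 P U" using rP by (simp add: rel_def)
  have hQ: "holo2 Q U" using rQ by (simp add: rel_def)
  have hh1: "holo2 h1 U" using r1 by (simp add: rel_def)
  have hh2: "holo2 h2 U" using r2 by (simp add: rel_def)
  have eP: "Qa y (cov p) = m p * P p" if "p \<in> U" for p using rP that by (simp add: rel_def m_def)
  have eQ: "Qc y (cov p) = m p * Q p" if "p \<in> U" for p using rQ that by (simp add: rel_def m_def)
  have e1: "D1 y (cov p) = m p * h1 p" if "p \<in> U" for p using r1 that by (simp add: rel_def m_def)
  have e2: "D2 y (cov p) = m p * h2 p" if "p \<in> U" for p using r2 that by (simp add: rel_def m_def)
  define E1 where "E1 = (\<lambda>p. opsub (opmul fst (T \<circ> Pb)) (delta1 \<circ> Pc) z p)"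
  define E2 where "E2 = (\<lambda>p. opsub (opmul (\<lambda>(t1, t2). 1 - t2) (T \<circ> opshift delta2 b')) (delta2 \<circ> opshift delta2 (c' - 1)) z p)"
  define E3 where "E3 = (\<lambda>p. opadd (opmul fst (delta2 \<circ> Pb)) (opsub (opmul (\<lambda>(t1, t2). 1 - t2) (opshift delta2 b')) delta2 \<circ> Pc) z p)"
  define F1 where "F1 = (\<lambda>q. opsub (opmul fst (opshift D1 (c' - b') \<circ> Qa)) (D1 \<circ> Qc) y q)"
  define F2 where "F2 = (\<lambda>q. opsub (opmul snd (opshift D2 b' \<circ> Qa)) (D2 \<circ> Qc) y q)"
  define F3 where "F3 = (\<lambda>q. opsub (opmul fst (opshift D1 (c' - b') \<circ> D2)) (opmul snd (opshift D2 b' \<circ> D1)) y q)"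
  have s1: "sys1 n b c b' c' z U \<longleftrightarrow> (\<forall>p\<in>U. E1 p = 0 \<and> E2 p = 0 \<and> E3 p = 0)"
    unfolding sys1_def Let_def E1_def E2_def E3_def T_def Pb_def Pc_def by (rule refl)
  have s2: "sys2 n b (c' - b') b' c (ytrans b' z) (cov ` U) \<longleftrightarrow> (\<forall>q\<in>V. F1 q = 0 \<and> F2 q = 0 \<and> F3 q = 0)"
    unfolding sys2_def Let_def F1_def F2_def F3_def Qa_def Qc_def V_def y_def by (rule refl)
  define G1 where "G1 = (\<lambda>p. fst p * (D1 P p + D2 P p + b' * P p + (c' - b') * P p) - (D1 Q p + D2 Q p + b' * Q p))"
  define G2 where "G2 = (\<lambda>p. fst p / snd p * (- D2 P p - b' * P p + b' * P p) - (- D2 Q p - b' * Q p))"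
  define G3 where "G3 = (\<lambda>p. fst p * ((D1 h2 p + D2 h2 p + b' * h2 p) + (c' - b') * h2 p) - fst p / snd p * ((- D2 h1 p - b' * h1 p) + b' * h1 p))"
  have pt: "E1 (t1, t2) = G1 (t1, t2) + G2 (t1, t2) \<and> E3 (t1, t2) = (1 - t2) * G2 (t1, t2)
      \<and> t1 * E2 (t1, t2) = (t2 - 1) * G3 (t1, t2)
      \<and> F1 (cov (t1, t2)) = m (t1, t2) * G1 (t1, t2) \<and> F2 (cov (t1, t2)) = m (t1, t2) * G2 (t1, t2)
      \<and> F3 (cov (t1, t2)) = m (t1, t2) * G3 (t1, t2)" if p: "(t1, t2) \<in> U" for t1 t2
  proof (intro conjI)
    have t: "t1 \<noteq> 0" "t2 \<noteq> 0" using pU[OF oU UD p] by auto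
    let ?M = "m (t1, t2)"
    have "E1 (t1, t2) = t1 * (t1 * pd1 P (t1, t2) + (t2 - 1) * pd2 P (t1, t2) + c' * P (t1, t2)) - t1 * pd1 Q (t1, t2)"
      unfolding E1_def T_def by (simp only: E1_val delta1_val delta2_val P_def Q_def)
    also have "\<dots> = (t1 * (t1 * pd1 P (t1, t2) + t2 * pd2 P (t1, t2) + b' * P (t1, t2) + (c' - b') * P (t1, t2)) - (t1 * pd1 Q (t1, t2) + t2 * pd2 Q (t1, t2) + b' * Q (t1, t2)))
     + (t1 / t2 * (- (t2 * pd2 P (t1, t2)) - b' * P (t1, t2) + b' * P (t1, t2)) - (- (t2 * pd2 Q (t1, t2)) - b' * Q (t1, t2)))"
      by (rule alg_e1[OF t(2)])
    also have "\<dots> = G1 (t1, t2) + G2 (t1, t2)" by (simp only: G1_def G2_def D1_val D2_val fst_conv snd_conv)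
    finally show "E1 (t1, t2) = G1 (t1, t2) + G2 (t1, t2)" .
    have "E3 (t1, t2) = t1 * ((t2 - 1) * pd2 P (t1, t2)) + ((1 - t2) * ((t2 - 1) * pd2 Q (t1, t2) + b' * Q (t1, t2)) - (t2 - 1) * pd2 Q (t1, t2))"
      unfolding E3_def by (simp only: E3_val delta2_val P_def Q_def)
    also have "\<dots> = (1 - t2) * (t1 / t2 * (- (t2 * pd2 P (t1, t2)) - b' * P (t1, t2) + b' * P (t1, t2)) - (- (t2 * pd2 Q (t1, t2)) - b' * Q (t1, t2)))"
      by (rule alg_e3[OF t(2)])
    also have "\<dots> = (1 - t2) * G2 (t1, t2)" by (simp only: G2_def D2_val fst_conv snd_conv)
    finally show "E3 (t1, t2) = (1 - t2) * G2 (t1, t2)" .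
    have mx: "pd2 (pd1 z) (t1, t2) = pd1 (pd2 z) (t1, t2)" by (rule mixed[OF hz p])
    have "E2 (t1, t2) = (1 - t2) * (t1 * ((t2 - 1) * pd1 (pd2 z) (t1, t2) + b' * pd1 z (t1, t2)) + (t2 - 1) * (pd2 z (t1, t2) + (t2 - 1) * pd2 (pd2 z) (t1, t2) + b' * pd2 z (t1, t2)) + c' * ((t2 - 1) * pd2 z (t1, t2) + b' * z (t1, t2))) - (t2 - 1) * (pd2 z (t1, t2) + (t2 - 1) * pd2 (pd2 z) (t1, t2) + (c' - 1) * pd2 z (t1, t2))"
      unfolding E2_def T_def
      by (simp only: E2_val delta1_val delta2_val pd_shift2[OF oU UD hz p]) (simp add: opshift_def delta2_val)
    hence "t1 * E2 (t1, t2) = t1 * ((1 - t2) * (t1 * ((t2 - 1) * pd1 (pd2 z) (t1, t2) + b' * pd1 z (t1, t2)) + (t2 - 1) * (pd2 z (t1, t2) + (t2 - 1) * pd2 (pd2 z) (t1, t2) + b' * pd2 z (t1, t2)) + c' * ((t2 - 1) * pd2 z (t1, t2) + b' * z (t1, t2))) - (t2 - 1) * (pd2 z (t1, t2) + (t2 - 1) * pd2 (pd2 z) (t1, t2) + (c' - 1) * pd2 z (t1, t2)))"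
      by simp
    also have "\<dots> = (t2 - 1) * (t1 * ((t1 * (- (t2 * pd1 (pd2 z) (t1, t2)) - b' * pd1 z (t1, t2)) + t2 * (- (pd2 z (t1, t2) + t2 * pd2 (pd2 z) (t1, t2)) - b' * pd2 z (t1, t2)) + b' * (- (t2 * pd2 z (t1, t2)) - b' * z (t1, t2))) + (c' - b') * (- (t2 * pd2 z (t1, t2)) - b' * z (t1, t2))) - t1 / t2 * ((- (t2 * (t1 * pd1 (pd2 z) (t1, t2) + pd2 z (t1, t2) + t2 * pd2 (pd2 z) (t1, t2) + b' * pd2 z (t1, t2))) - b' * (t1 * pd1 z (t1, t2) + t2 * pd2 z (t1, t2) + b' * z (t1, t2))) + b' * (t1 * pd1 z (t1, t2) + t2 * pd2 z (t1, t2) + b' * z (t1, t2))))"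
      by (rule alg_e2[OF t(2)])
    also have "\<dots> = (t2 - 1) * G3 (t1, t2)"
      unfolding G3_def fst_conv snd_conv
      by (simp only: D1_val D2_val pd_h2[OF oU UD hz p] pd_h1[OF oU UD hz p, folded h1_def] h1_def h2_def mx)
    finally show "t1 * E2 (t1, t2) = (t2 - 1) * G3 (t1, t2)" .
    have q1: "fst (cov (t1, t2)) = t1" and q2: "snd (cov (t1, t2)) = t1 / t2" by simp_all
    note dP = rel_D[OF oU UD rP p, folded m_def] and dQ = rel_D[OF oU UD rQ p, folded m_def]
    have "F1 (cov (t1, t2)) = t1 * (?M * (D1 P (t1, t2) + D2 P (t1, t2) + b' * P (t1, t2)) + (c' - b') * (?M * P (t1, t2))) - ?M * (D1 Q (t1, t2) + D2 Q (t1, t2) + b' * Q (t1, t2))"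
      unfolding F1_def by (simp only: F1_val q1 dP(1) dQ(1) eP[OF p])
    also have "\<dots> = ?M * G1 (t1, t2)" by (simp add: G1_def algebra_simps)
    finally show "F1 (cov (t1, t2)) = ?M * G1 (t1, t2)" .
    have "F2 (cov (t1, t2)) = t1 / t2 * (?M * (- D2 P (t1, t2) - b' * P (t1, t2)) + b' * (?M * P (t1, t2))) - ?M * (- D2 Q (t1, t2) - b' * Q (t1, t2))"
      unfolding F2_def by (simp only: F2_val q2 dP(2) dQ(2) eP[OF p])
    also have "\<dots> = ?M * G2 (t1, t2)" by (simp add: G2_def algebra_simps)
    finally show "F2 (cov (t1, t2)) = ?M * G2 (t1, t2)" .
    note d2 = rel_D(1)[OF oU UD r2 p, folded m_def] and d1 = rel_D(2)[OF oU UD r1 p, folded m_def]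
    have "F3 (cov (t1, t2)) = t1 * (?M * (D1 h2 (t1, t2) + D2 h2 (t1, t2) + b' * h2 (t1, t2)) + (c' - b') * (?M * h2 (t1, t2)))
        - t1 / t2 * (?M * (- D2 h1 (t1, t2) - b' * h1 (t1, t2)) + b' * (?M * h1 (t1, t2)))"
      unfolding F3_def by (simp only: F3_val q1 q2 d1 d2 e1[OF p] e2[OF p])
    also have "\<dots> = ?M * G3 (t1, t2)" by (simp add: G3_def algebra_simps)
    finally show "F3 (cov (t1, t2)) = ?M * G3 (t1, t2)" .
  qed
  have snz: "snd p \<noteq> 0" if "p \<in> U" for p using pU[OF oU UD, of "fst p" "snd p"] that by simp
  have cG2: "continuous_on U G2"
  proof -
    have "continuous_on U (D2 P)" "continuous_on U P" "continuous_on U (D2 Q)" "continuous_on U Q"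
      using holo2_cont holo2_D2 hP hQ by blast+
    thus ?thesis unfolding G2_def using snz by (intro continuous_intros) auto
  qed
  have cG3: "continuous_on U G3"
  proof -
    have "continuous_on U (D1 h2)" "continuous_on U (D2 h2)" "continuous_on U h2" "continuous_on U (D2 h1)" "continuous_on U h1"
      using holo2_cont holo2_D1 holo2_D2 hh1 hh2 by blast+
    thus ?thesis unfolding G3_def using snz by (intro continuous_intros) auto
  qed
  show ?thesis
  proof
    assume "sys1 n b c b' c' z U"
    hence E: "\<forall>p\<in>U. E1 p = 0 \<and> E2 p = 0 \<and> E3 p = 0" using s1 by blast
    have g2: "G2 p = 0" if "p \<in> U" for p
    proof (rule vanish[OF oU cG2 _ that])
      fix p assume p: "p \<in> U" "snd p \<noteq> 1"
      obtain t1 t2 where pe: "p = (t1, t2)" by force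
      have "(1 - t2) * G2 (t1, t2) = 0" using pt[of t1 t2] E p pe by auto
      thus "G2 p = 0" using p pe by simp
    qed
    have g3: "G3 p = 0" if "p \<in> U" for p
    proof (rule vanish[OF oU cG3 _ that])
      fix p assume p: "p \<in> U" "snd p \<noteq> 1"
      obtain t1 t2 where pe: "p = (t1, t2)" by force
      have "(t2 - 1) * G3 (t1, t2) = 0" using pt[of t1 t2] E p pe by auto
      thus "G3 p = 0" using p pe by simp
    qed
    have g1: "G1 p = 0" if "p \<in> U" for p
    proof -
      obtain t1 t2 where pe: "p = (t1, t2)" by force
      show ?thesis using pt[of t1 t2] E g2 that pe by auto
    qed
    have "\<forall>q\<in>V. F1 q = 0 \<and> F2 q = 0 \<and> F3 q = 0"
    proof
      fix q assume "q \<in> V"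
      then obtain t1 t2 where p: "(t1, t2) \<in> U" "q = cov (t1, t2)" unfolding V_def by force
      thus "F1 q = 0 \<and> F2 q = 0 \<and> F3 q = 0" using pt[OF p(1)] g1 g2 g3 by auto
    qed
    thus "sys2 n b (c' - b') b' c (ytrans b' z) (cov ` U)" using s2 by blast
  next
    assume "sys2 n b (c' - b') b' c (ytrans b' z) (cov ` U)"
    hence F: "\<forall>q\<in>V. F1 q = 0 \<and> F2 q = 0 \<and> F3 q = 0" using s2 by blast
    have "\<forall>p\<in>U. E1 p = 0 \<and> E2 p = 0 \<and> E3 p = 0"
    proof
      fix p assume pU': "p \<in> U"
      obtain t1 t2 where pe: "p = (t1, t2)" by force
      have p: "(t1, t2) \<in> U" using pU' pe by simp
      have t: "t1 \<noteq> 0" "t2 \<noteq> 0" using pU[OF oU UD p] by auto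
      have mnz: "m (t1, t2) \<noteq> 0" unfolding m_def by (rule m_nz[OF oU UD p])
      have qV: "cov (t1, t2) \<in> V" using p unfolding V_def by blast
      have "G1 (t1, t2) = 0" "G2 (t1, t2) = 0" "G3 (t1, t2) = 0"
        using F qV pt[OF p] mnz by auto
      thus "E1 p = 0 \<and> E2 p = 0 \<and> E3 p = 0" using pt[OF p] t pe by auto
    qed
    thus "sys1 n b c b' c' z U" using s1 by blast
  qed
qed

end
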